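(* Let $T$ be a lifted graph, $F\colon T\to T$ a continuous sun-like map of degree 1, ${\cal P}$ a basic partition of $F$ and ${\cal G}$ its covering graph, and let $\alpha,\beta$ be vertices of ${\cal G}$. (i) All arrows starting from $\alpha$, except at most one, end at a vertex of the basis. (ii) If $\alpha\to\beta$ and $H(\beta)>0$, then $H(\beta)=H(\alpha)+1$.
   Context: A lifted graph is a connected topological space $T$ with a homeomorphism $h\colon\mathbb R\to h(\mathbb R)\subset T$ and a homeomorphism $\tau\colon T\to T$ such that $\tau(h(x))=h(x+1)$, the closure of each connected component of $T\setminus h(\mathbb R)$ is a topological finite graph meeting $h(\mathbb R)$ in exactly one point, and only finitely many such components have closure meeting $h([0,1])$. Identify $h(\mathbb R)$ with $\mathbb R$, write $x+m:=\tau^m(x)$; $r_{\mathbb R}\colon T\to\mathbb R$ is the identity on $\mathbb R$ and maps a component $C$ of $T\setminus\mathbb R$ to the point $\overline C\cap\mathbb R$. $F$ has degree 1 if $F(x+1)=F(x)+1$. Let $T_{\mathbb R}:=\overline{\bigcup_{n\ge0}F^n(\mathbb R)}$, $X:=\overline{T\setminus T_{\mathbb R}}\cap r_{\mathbb R}^{-1}([0,1))$. $F$ is sun-like if $(T\setminus T_{\mathbb R})\cap r_{\mathbb R}^{-1}([0,1))$ consists of finitely many intervals with pairwise disjoint closures $X^i$, $i\in\Lambda$ (branches), each a compact interval meeting $T_{\mathbb R}$ in one endpoint $\min X^i$ (fixing the order of $X^i$). A basic partition is a finite family ${\cal P}=\{X^i_j\}$ of pairwise disjoint nonempty compact intervals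 $X^i_1<\dots<X^i_{N_i}$ in $X^i$, with $\ell(X^i_j)\in\Lambda$, $p(X^i_j)\in\mathbb Z$, such that $F(X^i_j)\subset(X^{\ell(X^i_j)}+p(X^i_j))\cup\mathrm{Int}(T_{\mathbb R})$, $F(\min X^i_j)=\min X^{\ell(X^i_j)}+p(X^i_j)$, and $F(X\setminus\bigcup X^i_j)\cap(X+\mathbb Z)=\emptyset$. For $A_0,\dots,A_n\in{\cal P}$, $\langle A_0\dots A_n\rangle:=F^n(\{x\in T: F^i(x)\in A_i+\mathbb Z,\ 0\le i\le n\})\cap X$. $A_0\dots A_n\sim B_0\dots B_m$ iff for some $k\le\min(n,m)$, $A_{n-i}=B_{m-i}$ ($0\le i\le k$) and $\langle A_0\dots A_{n-k}\rangle=A_{n-k}=B_{m-k}=\langle B_0\dots B_{m-k}\rangle$. The covering graph ${\cal G}$: vertices are classes $A_0\dots A_n/\!\sim$ with $\langle A_0\dots A_n\rangle\ne\emptyset$; arrow $\alpha\to\beta$ iff $\alpha=A_0\dots A_n/\!\sim$, $\beta=A_0\dots A_nA_{n+1}/\!\sim$ for some $A_i\in{\cal P}$. The significant part of $A_0\dots A_n$ is $A_i\dots A_n$ with $i$ the largest index such that $A_0\dots A_n\sim A_i\dots A_n$; the height of the class $\alpha$ is $H(\alpha):=n-i$. The basis is the set of vertices of height $0$, i.e. $\{A/\!\sim: A\in{\cal P}\}$. *)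

theory Defs
  imports "HOL-Analysis.Analysis"
begin

(* x + m := tau^m(x), m an integer (tau is a homeomorphism of T) *)
definition shift :: "'a topology \<Rightarrow> ('a \<Rightarrow> 'a) \<Rightarrow> int \<Rightarrow> 'a \<Rightarrow> 'a" where
  "shift T \<tau> m x = (if 0 \<le> m then (\<tau> ^^ nat m) x
                      else (inv_into (topspace T) \<tau> ^^ nat (- m)) x)"

definition plusZ :: "'a topology \<Rightarrow> ('a \<Rightarrow> 'a) \<Rightarrow> 'a set \<Rightarrow> 'a set" where
  "plusZ T \<tau> A = (\<Union>m::int. shift T \<tau> m ` A)"

definition top_finite_graph :: "'a topology \<Rightarrow> bool" where
  "top_finite_graph S \<longleftrightarrow> Hausdorff_space S \<and>
     (\<exists>V E. finite V \<and> finite E \<and> V \<subseteq> topspace S \<and>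
        (\<forall>e\<in>E. continuous_map (subtopology euclideanreal {0..1}) S e \<and>
                e 0 \<in> V \<and> e 1 \<in> V \<and> inj_on e {0<..<1} \<and>
                e ` {0<..<1} \<inter> V = {}) \<and>
        (\<forall>e\<in>E. \<forall>e'\<in>E. e \<noteq> e' \<longrightarrow> e ` {0<..<1} \<inter> e' ` {0<..<1} = {}) \<and>
        topspace S = V \<union> (\<Union>e\<in>E. e ` {0<..<1}))"

definition lifted_graph :: "'a topology \<Rightarrow> (real \<Rightarrow> 'a) \<Rightarrow> ('a \<Rightarrow> 'a) \<Rightarrow> bool" where
  "lifted_graph T h \<tau> \<longleftrightarrow>
     connected_space T \<and>
     homeomorphic_map euclideanreal (subtopology T (range h)) h \<and>
     homeomorphic_map T T \<tau> \<and>
     (\<forall>x. \<tau> (h x) = h (x + 1)) \<and>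
     (\<forall>C \<in> connected_components_of (subtopology T (topspace T - range h)).
        top_finite_graph (subtopology T (T closure_of C)) \<and>
        (\<exists>!y. y \<in> T closure_of C \<inter> range h)) \<and>
     finite {C \<in> connected_components_of (subtopology T (topspace T - range h)).
               T closure_of C \<inter> h ` {0..1} \<noteq> {}}"

(* the retraction r_R : T -> R (values in R, identified with h(R)) *)
definition rR :: "'a topology \<Rightarrow> (real \<Rightarrow> 'a) \<Rightarrow> 'a \<Rightarrow> real" where
  "rR T h x = (if x \<in> range h then inv h x
     else (THE t. h t \<in> T closure_of
             (connected_component_of_set (subtopology T (topspace T - range h)) x)))"

definition degree_one :: "'a topology \<Rightarrow> ('a \<Rightarrow> 'a) \<Rightarrow> ('a \<Rightarrow> 'a) \<Rightarrow> bool" where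
  "degree_one T \<tau> F \<longleftrightarrow> (\<forall>x\<in>topspace T. F (\<tau> x) = \<tau> (F x))"

definition TR :: "'a topology \<Rightarrow> (real \<Rightarrow> 'a) \<Rightarrow> ('a \<Rightarrow> 'a) \<Rightarrow> 'a set" where
  "TR T h F = T closure_of (\<Union>n. (F ^^ n) ` range h)"

definition XX :: "'a topology \<Rightarrow> (real \<Rightarrow> 'a) \<Rightarrow> ('a \<Rightarrow> 'a) \<Rightarrow> 'a set" where
  "XX T h F = T closure_of (topspace T - TR T h F) \<inter> {x \<in> topspace T. rR T h x \<in> {0..<1}}"

(* sun-like, with the branches X^i = gamma i ` {0..1}, i in Lambda, where gamma i is a
   homeomorphism of [0,1] onto X^i with gamma i 0 = min X^i (this fixes the order of X^i) *)
definition sun_like :: "'a topology \<Rightarrow> (real \<Rightarrow> 'a) \<Rightarrow> ('a \<Rightarrow> 'a) \<Rightarrow> 'i set \<Rightarrow> ('i \<Rightarrow> real \<Rightarrow> 'a) \<Rightarrow> bool" where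
  "sun_like T h F \<Lambda> \<gamma> \<longleftrightarrow> finite \<Lambda> \<and>
     (\<exists>I. (topspace T - TR T h F) \<inter> {x \<in> topspace T. rR T h x \<in> {0..<1}} = (\<Union>i\<in>\<Lambda>. I i) \<and>
        (\<forall>i\<in>\<Lambda>. (\<exists>J::real set. is_interval J \<and>
                      subtopology T (I i) homeomorphic_space subtopology euclideanreal J) \<and>
                  T closure_of (I i) = \<gamma> i ` {0..1}) \<and>
        (\<forall>i\<in>\<Lambda>. homeomorphic_map (subtopology euclideanreal {0..1})
                      (subtopology T (\<gamma> i ` {0..1})) (\<gamma> i) \<and>
                  \<gamma> i ` {0..1} \<inter> TR T h F = {\<gamma> i 0}) \<and>
        (\<forall>i\<in>\<Lambda>. \<forall>j\<in>\<Lambda>. i \<noteq> j \<longrightarrow> \<gamma> i ` {0..1} \<inter> \<gamma> j ` {0..1} = {}))"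

definition basic_partition :: "'a topology \<Rightarrow> (real \<Rightarrow> 'a) \<Rightarrow> ('a \<Rightarrow> 'a) \<Rightarrow> ('a \<Rightarrow> 'a) \<Rightarrow>
    'i set \<Rightarrow> ('i \<Rightarrow> real \<Rightarrow> 'a) \<Rightarrow> 'a set set \<Rightarrow> ('a set \<Rightarrow> 'i) \<Rightarrow> ('a set \<Rightarrow> int) \<Rightarrow> bool" where
  "basic_partition T h \<tau> F \<Lambda> \<gamma> P l p \<longleftrightarrow> finite P \<and>
     (\<forall>A\<in>P. A \<noteq> {} \<and> l A \<in> \<Lambda> \<and>
        (\<exists>i\<in>\<Lambda>. \<exists>a b. 0 \<le> a \<and> a \<le> b \<and> b \<le> 1 \<and> A = \<gamma> i ` {a..b} \<and>
            F (\<gamma> i a) = shift T \<tau> (p A) (\<gamma> (l A) 0)) \<and>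
        F ` A \<subseteq> (shift T \<tau> (p A) ` (\<gamma> (l A) ` {0..1})) \<union> (T interior_of TR T h F)) \<and>
     (\<forall>A\<in>P. \<forall>B\<in>P. A \<noteq> B \<longrightarrow> A \<inter> B = {}) \<and>
     F ` (XX T h F - \<Union>P) \<inter> plusZ T \<tau> (XX T h F) = {}"

definition cyl :: "'a topology \<Rightarrow> (real \<Rightarrow> 'a) \<Rightarrow> ('a \<Rightarrow> 'a) \<Rightarrow> ('a \<Rightarrow> 'a) \<Rightarrow> 'a set list \<Rightarrow> 'a set" where
  "cyl T h \<tau> F As = (F ^^ (length As - 1)) `
      {x \<in> topspace T. \<forall>i<length As. (F ^^ i) x \<in> plusZ T \<tau> (As ! i)} \<inter> XX T h F"

definition csim :: "'a topology \<Rightarrow> (real \<Rightarrow> 'a) \<Rightarrow> ('a \<Rightarrow> 'a) \<Rightarrow> ('a \<Rightarrow> 'a) \<Rightarrow> 'a set list \<Rightarrow> 'a set list \<Rightarrow> bool" where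
  "csim T h \<tau> F As Bs \<longleftrightarrow> (let n = length As - 1; m = length Bs - 1 in
     \<exists>k \<le> min n m. (\<forall>i\<le>k. As ! (n - i) = Bs ! (m - i)) \<and>
        cyl T h \<tau> F (take (n - k + 1) As) = As ! (n - k) \<and>
        As ! (n - k) = Bs ! (m - k) \<and>
        Bs ! (m - k) = cyl T h \<tau> F (take (m - k + 1) Bs))"

definition cls :: "'a topology \<Rightarrow> (real \<Rightarrow> 'a) \<Rightarrow> ('a \<Rightarrow> 'a) \<Rightarrow> ('a \<Rightarrow> 'a) \<Rightarrow> 'a set set \<Rightarrow> 'a set list \<Rightarrow> 'a set list set" where
  "cls T h \<tau> F P As = {Bs. Bs \<noteq> [] \<and> set Bs \<subseteq> P \<and> csim T h \<tau> F As Bs}"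

definition cg_vertices :: "'a topology \<Rightarrow> (real \<Rightarrow> 'a) \<Rightarrow> ('a \<Rightarrow> 'a) \<Rightarrow> ('a \<Rightarrow> 'a) \<Rightarrow> 'a set set \<Rightarrow> 'a set list set set" where
  "cg_vertices T h \<tau> F P = {cls T h \<tau> F P As | As. As \<noteq> [] \<and> set As \<subseteq> P \<and> cyl T h \<tau> F As \<noteq> {}}"

definition cg_arrow :: "'a topology \<Rightarrow> (real \<Rightarrow> 'a) \<Rightarrow> ('a \<Rightarrow> 'a) \<Rightarrow> ('a \<Rightarrow> 'a) \<Rightarrow> 'a set set \<Rightarrow>
    'a set list set \<Rightarrow> 'a set list set \<Rightarrow> bool" where
  "cg_arrow T h \<tau> F P \<alpha> \<beta> \<longleftrightarrow> \<alpha> \<in> cg_vertices T h \<tau> F P \<and> \<beta> \<in> cg_vertices T h \<tau> F P \<and>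
     (\<exists>As A. As \<noteq> [] \<and> set As \<subseteq> P \<and> A \<in> P \<and>
        \<alpha> = cls T h \<tau> F P As \<and> \<beta> = cls T h \<tau> F P (As @ [A]))"

definition word_height :: "'a topology \<Rightarrow> (real \<Rightarrow> 'a) \<Rightarrow> ('a \<Rightarrow> 'a) \<Rightarrow> ('a \<Rightarrow> 'a) \<Rightarrow> 'a set list \<Rightarrow> nat" where
  "word_height T h \<tau> F As =
     (length As - 1) - (GREATEST i. i < length As \<and> csim T h \<tau> F As (drop i As))"

definition cg_height :: "'a topology \<Rightarrow> (real \<Rightarrow> 'a) \<Rightarrow> ('a \<Rightarrow> 'a) \<Rightarrow> ('a \<Rightarrow> 'a) \<Rightarrow> 'a set list set \<Rightarrow> nat" where
  "cg_height T h \<tau> F \<alpha> = word_height T h \<tau> F (SOME As. As \<in> \<alpha>)"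

definition cg_basis :: "'a topology \<Rightarrow> (real \<Rightarrow> 'a) \<Rightarrow> ('a \<Rightarrow> 'a) \<Rightarrow> ('a \<Rightarrow> 'a) \<Rightarrow> 'a set set \<Rightarrow> 'a set list set set" where
  "cg_basis T h \<tau> F P = {\<alpha> \<in> cg_vertices T h \<tau> F P. cg_height T h \<tau> F \<alpha> = 0}"

end

theory Submission
  imports Defs
begin


locale setting =
  fixes T :: "'a topology" and h :: "real \<Rightarrow> 'a" and \<tau> F :: "'a \<Rightarrow> 'a"
    and \<Lambda> :: "'i set" and \<gamma> :: "'i \<Rightarrow> real \<Rightarrow> 'a"
    and P :: "'a set set" and l :: "'a set \<Rightarrow> 'i" and p :: "'a set \<Rightarrow> int"
  assumes lg: "lifted_graph T h \<tau>"
    and contF: "continuous_map T T F"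
    and deg: "degree_one T \<tau> F"
    and sun: "sun_like T h F \<Lambda> \<gamma>"
    and bp: "basic_partition T h \<tau> F \<Lambda> \<gamma> P l p"
begin

abbreviation "tsp \<equiv> topspace T"
abbreviation "\<sigma> \<equiv> inv_into (topspace T) \<tau>"
abbreviation "sh \<equiv> shift T \<tau>"

lemma tau_hom: "homeomorphic_map T T \<tau>" using lg unfolding lifted_graph_def by blast
lemma tau_inj: "inj_on \<tau> tsp" using homeomorphic_imp_injective_map[OF tau_hom] .
lemma tau_surj: "\<tau> ` tsp = tsp" using homeomorphic_imp_surjective_map[OF tau_hom] .
lemma tau_top: "x \<in> tsp \<Longrightarrow> \<tau> x \<in> tsp" using tau_surj by blast
lemma sigma_top: "x \<in> tsp \<Longrightarrow> \<sigma> x \<in> tsp"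
  by (metis inv_into_into tau_surj)
lemma tau_sigma: "x \<in> tsp \<Longrightarrow> \<tau> (\<sigma> x) = x"
  by (metis f_inv_into_f tau_surj)
lemma sigma_tau: "x \<in> tsp \<Longrightarrow> \<sigma> (\<tau> x) = x"
  by (meson inv_into_f_f tau_inj)

lemma tau_pow_top: "x \<in> tsp \<Longrightarrow> (\<tau> ^^ n) x \<in> tsp"
  by (induction n) (auto simp: tau_top)
lemma sigma_pow_top: "x \<in> tsp \<Longrightarrow> (\<sigma> ^^ n) x \<in> tsp"
  by (induction n) (auto simp: sigma_top)

lemma sh_top: "x \<in> tsp \<Longrightarrow> sh m x \<in> tsp"
  by (simp add: shift_def tau_pow_top sigma_pow_top)

lemma sh_0[simp]: "sh 0 x = x" by (simp add: shift_def)

lemma sh_succ: assumes "x \<in> tsp" shows "sh (m+1) x = \<tau> (sh m x)"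
proof (cases "0 \<le> m")
  case True
  then have "nat (m+1) = Suc (nat m)" by simp
  then show ?thesis using True by (simp add: shift_def)
next
  case False
  then have m1: "m + 1 \<le> 0" by simp
  have "nat (-m) = Suc (nat (-(m+1)))" using False by simp
  then have "sh m x = \<sigma> ((\<sigma> ^^ nat (-(m+1))) x)" using False by (simp add: shift_def)
  moreover have "sh (m+1) x = (\<sigma> ^^ nat (-(m+1))) x"
    using m1 by (cases "m+1 = 0") (auto simp: shift_def)
  moreover have "\<tau> (\<sigma> ((\<sigma> ^^ nat (-(m+1))) x)) = (\<sigma> ^^ nat (-(m+1))) x"
    by (rule tau_sigma[OF sigma_pow_top[OF assms]])
  ultimately show ?thesis by simp
qed

lemma sh_pred: assumes "x \<in> tsp" shows "sh (m-1) x = \<sigma> (sh m x)"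
proof -
  have "sh m x = \<tau> (sh (m-1) x)" using sh_succ[OF assms, of "m-1"] by simp
  then show ?thesis using sigma_tau sh_top assms by simp
qed

lemma sh_add: assumes "x \<in> tsp" shows "sh m (sh q x) = sh (m+q) x"
proof (induction m rule: int_induct[where k=0])
  case base
  then show ?case by simp
next
  case (step1 i)
  have "sh (i+1) (sh q x) = \<tau> (sh i (sh q x))" using sh_succ[OF sh_top[OF assms], of i] .
  also have "\<dots> = \<tau> (sh (i+q) x)" using step1 by simp
  also have "\<dots> = sh (i+q+1) x" using sh_succ[OF assms, of "i+q"] by simp
  finally show ?case by (simp add: algebra_simps)
next
  case (step2 i)
  have "sh (i-1) (sh q x) = \<sigma> (sh i (sh q x))" using sh_pred[OF sh_top[OF assms], of i] .
  also have "\<dots> = \<sigma> (sh (i+q) x)" using step2 by simp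
  also have "\<dots> = sh (i+q-1) x" using sh_pred[OF assms, of "i+q"] by simp
  finally show ?case by (simp add: algebra_simps)
qed

lemma sh_inv[simp]: "x \<in> tsp \<Longrightarrow> sh (-m) (sh m x) = x"
  using sh_add[of x "-m" m] by simp
lemma sh_inv2[simp]: "x \<in> tsp \<Longrightarrow> sh m (sh (-m) x) = x"
  using sh_add[of x m "-m"] by simp

lemma F_top: "x \<in> tsp \<Longrightarrow> F x \<in> tsp"
  using continuous_map_image_subset_topspace[OF contF] by blast

lemma F_tau: "x \<in> tsp \<Longrightarrow> F (\<tau> x) = \<tau> (F x)"
  using deg unfolding degree_one_def by blast

lemma F_sigma: assumes "x \<in> tsp" shows "F (\<sigma> x) = \<sigma> (F x)"
proof -
  have "\<tau> (F (\<sigma> x)) = F x" using F_tau[OF sigma_top[OF assms]] tau_sigma[OF assms] by simp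
  then have "\<sigma> (\<tau> (F (\<sigma> x))) = \<sigma> (F x)" by simp
  then show ?thesis using sigma_tau[OF F_top[OF sigma_top[OF assms]]] by simp
qed

lemma F_sh: assumes "x \<in> tsp" shows "F (sh m x) = sh m (F x)"
proof (induction m rule: int_induct[where k=0])
  case base
  then show ?case by simp
next
  case (step1 i)
  have "F (sh (i+1) x) = F (\<tau> (sh i x))" using sh_succ[OF assms, of i] by (rule arg_cong)
  also have "\<dots> = \<tau> (F (sh i x))" using F_tau[OF sh_top[OF assms]] .
  also have "\<dots> = \<tau> (sh i (F x))" using step1(2) by (rule arg_cong)
  also have "\<dots> = sh (i+1) (F x)" using sh_succ[OF F_top[OF assms], of i] by (rule sym)
  finally show ?case .
next
  case (step2 i)
  have "F (sh (i-1) x) = F (\<sigma> (sh i x))" using sh_pred[OF assms, of i] by (rule arg_cong)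
  also have "\<dots> = \<sigma> (F (sh i x))" using F_sigma[OF sh_top[OF assms]] .
  also have "\<dots> = \<sigma> (sh i (F x))" using step2(2) by (rule arg_cong)
  also have "\<dots> = sh (i-1) (F x)" using sh_pred[OF F_top[OF assms], of i] by (rule sym)
  finally show ?case .
qed

lemma Fpow_top: "x \<in> tsp \<Longrightarrow> (F ^^ n) x \<in> tsp"
  by (induction n) (auto simp: F_top)

lemma Fpow_sh: assumes "x \<in> tsp" shows "(F ^^ n) (sh m x) = sh m ((F ^^ n) x)"
  by (induction n) (auto simp: F_sh Fpow_top assms)

end


context setting
begin

lemma h_hom: "homeomorphic_map euclideanreal (subtopology T (range h)) h"
  using lg unfolding lifted_graph_def by blast
lemma h_tsp: "h x \<in> tsp"
  using homeomorphic_imp_surjective_map[OF h_hom] by auto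
lemma h_inj: "inj h"
  using homeomorphic_imp_injective_map[OF h_hom] by simp
lemma tau_h: "\<tau> (h x) = h (x + 1)"
  using lg unfolding lifted_graph_def by blast
lemma sigma_h: "\<sigma> (h x) = h (x - 1)"
proof -
  have "\<tau> (h (x-1)) = h x" using tau_h[of "x-1"] by simp
  then have "\<sigma> (\<tau> (h (x-1))) = \<sigma> (h x)" by simp
  then show ?thesis using sigma_tau[OF h_tsp] by simp
qed

lemma sh_h: "sh m (h x) = h (x + of_int m)"
proof (induction m rule: int_induct[where k=0])
  case base then show ?case by simp
next
  case (step1 i)
  have "sh (i+1) (h x) = \<tau> (sh i (h x))" using sh_succ[OF h_tsp] .
  also have "\<dots> = \<tau> (h (x + of_int i))" using step1(2) by (rule arg_cong)
  also have "\<dots> = h (x + of_int i + 1)" by (rule tau_h)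
  also have "\<dots> = h (x + of_int (i+1))" by (simp add: algebra_simps)
  finally show ?case .
next
  case (step2 i)
  have "sh (i-1) (h x) = \<sigma> (sh i (h x))" using sh_pred[OF h_tsp] .
  also have "\<dots> = \<sigma> (h (x + of_int i))" using step2(2) by (rule arg_cong)
  also have "\<dots> = h (x + of_int i - 1)" by (rule sigma_h)
  also have "\<dots> = h (x + of_int (i-1))" by (simp add: algebra_simps)
  finally show ?case .
qed

lemma sigma_hom: "homeomorphic_map T T \<sigma>"
proof -
  obtain g where g: "homeomorphic_maps T T \<tau> g" using tau_hom homeomorphic_map_maps by blast
  then have gh: "homeomorphic_map T T g" and gt: "\<And>x. x \<in> tsp \<Longrightarrow> g (\<tau> x) = x"
    by (auto simp: homeomorphic_maps_map)
  have "\<And>y. y \<in> tsp \<Longrightarrow> g y = \<sigma> y"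
    by (metis gt sigma_top tau_sigma)
  then show ?thesis using homeomorphic_map_eq[OF gh] by blast
qed

lemma pow_hom: "homeomorphic_map T T f \<Longrightarrow> homeomorphic_map T T (f ^^ n)"
proof (induction n)
  case 0 then show ?case by (simp add: id_def[symmetric])
next
  case (Suc n)
  show ?case unfolding funpow.simps(2) by (rule homeomorphic_map_compose[OF Suc.IH[OF Suc.prems] Suc.prems])
qed

lemma sh_hom: "homeomorphic_map T T (sh m)"
proof (cases "0 \<le> m")
  case True
  then show ?thesis using homeomorphic_map_eq[OF pow_hom[OF tau_hom, of "nat m"]]
    by (simp add: shift_def)
next
  case False
  then show ?thesis using homeomorphic_map_eq[OF pow_hom[OF sigma_hom, of "nat (-m)"]]
    by (simp add: shift_def)
qed

lemma sh_cont: "continuous_map T T (sh m)"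
  using homeomorphic_imp_continuous_map[OF sh_hom] .

abbreviation "S0 \<equiv> (\<Union>n. (F ^^ n) ` range h)"
abbreviation "TRs \<equiv> TR T h F"
abbreviation "XXs \<equiv> XX T h F"
abbreviation "ITR \<equiv> T interior_of TR T h F"

lemma S0_tsp: "S0 \<subseteq> tsp" using Fpow_top h_tsp by blast

lemma sh_S0: "x \<in> S0 \<Longrightarrow> sh m x \<in> S0"
proof -
  assume "x \<in> S0"
  then obtain n t where x: "x = (F ^^ n) (h t)" by blast
  have "sh m x = (F ^^ n) (h (t + of_int m))"
    using x Fpow_sh[OF h_tsp, of n m t] sh_h by simp
  then show ?thesis by blast
qed

lemma TR_closed: "closedin T TRs" by (simp add: TR_def)
lemma TR_tsp: "TRs \<subseteq> tsp" by (simp add: TR_def closure_of_subset_topspace)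
lemma range_h_TR: "range h \<subseteq> TRs"
proof -
  have "range h \<subseteq> S0"
  proof
    fix y assume "y \<in> range h"
    then have "y \<in> (F ^^ 0) ` range h" by simp
    then show "y \<in> S0" by blast
  qed
  then show ?thesis unfolding TR_def using closure_of_subset[OF S0_tsp] by blast
qed

lemma sh_TR: "x \<in> TRs \<Longrightarrow> sh m x \<in> TRs"
proof -
  assume x: "x \<in> TRs"
  have "sh m ` S0 \<subseteq> S0" using sh_S0 by (rule image_subsetI)
  then have c1: "T closure_of (sh m ` S0) \<subseteq> T closure_of S0" by (rule closure_of_mono)
  have c2: "sh m ` (T closure_of S0) \<subseteq> T closure_of (sh m ` S0)"
    by (rule continuous_map_image_closure_subset[OF sh_cont])
  from c2 c1 have sub: "sh m ` (T closure_of S0) \<subseteq> T closure_of S0" by (rule subset_trans)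
  have "sh m x \<in> sh m ` (T closure_of S0)" using x unfolding TR_def by (rule imageI)
  then show ?thesis unfolding TR_def using sub by (rule subsetD[rotated])
qed

lemma sh_ITR: "x \<in> ITR \<Longrightarrow> sh m x \<in> ITR"
proof -
  assume x: "x \<in> ITR"
  have "T interior_of (sh m ` TRs) = sh m ` ITR"
    by (rule homeomorphic_map_interior_of[OF sh_hom TR_tsp])
  moreover have "T interior_of (sh m ` TRs) \<subseteq> ITR"
    by (rule interior_of_mono) (use sh_TR in \<open>rule image_subsetI\<close>)
  moreover have "sh m x \<in> sh m ` ITR" using x by (rule imageI)
  ultimately show ?thesis by (metis subsetD)
qed

abbreviation "Y0 \<equiv> subtopology T (tsp - range h)"
definition ccT :: "'a \<Rightarrow> 'a set" where "ccT y = connected_component_of_set Y0 y"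

lemma rR_h: "rR T h (h t) = t"
  by (simp add: rR_def inv_f_f[OF h_inj])

lemma cc_unique:
  assumes "y \<in> tsp" "y \<notin> range h"
  shows "\<exists>!t. h t \<in> T closure_of (ccT y)"
proof -
  have "ccT y \<in> connected_components_of Y0"
    unfolding ccT_def
    using assms unfolding connected_components_of_def by auto
  then have "\<exists>!z. z \<in> T closure_of (ccT y) \<inter> range h"
    using lg unfolding lifted_graph_def by blast
  then obtain z where z: "z \<in> T closure_of (ccT y) \<inter> range h"
    and zu: "\<And>w. w \<in> T closure_of (ccT y) \<inter> range h \<Longrightarrow> w = z"
    by blast
  obtain t where t: "z = h t" using z by blast
  show ?thesis
  proof (rule ex1I[of _ t])
    have "z \<in> T closure_of (ccT y)" using z by (rule IntD1)
    then show "h t \<in> T closure_of (ccT y)" using t by simp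
    fix s assume "h s \<in> T closure_of (ccT y)"
    moreover have "h s \<in> range h" by (rule rangeI)
    ultimately have "h s = z" using zu by (meson IntI)
    then have "h s = h t" using t by simp
    then show "s = t" using h_inj by (simp add: inj_eq)
  qed
qed

lemma rR_cc:
  assumes "y \<in> tsp" "y \<notin> range h" "h t \<in> T closure_of (ccT y)"
  shows "rR T h y = t"
proof -
  have "(THE t. h t \<in> T closure_of (ccT y)) = t"
    by (rule the1_equality[OF cc_unique[OF assms(1,2)] assms(3)])
  then show ?thesis using assms(2) by (simp add: rR_def ccT_def)
qed

lemma rR_cc_ex:
  assumes "y \<in> tsp" "y \<notin> range h"
  shows "h (rR T h y) \<in> T closure_of (ccT y)"
proof -
  have "rR T h y = (THE t. h t \<in> T closure_of (ccT y))"
    using assms(2) by (simp add: rR_def ccT_def)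
  then show ?thesis using theI'[OF cc_unique[OF assms]] by simp
qed

lemma tau_range: assumes "x \<in> tsp" "\<tau> x \<in> range h" shows "x \<in> range h"
proof -
  obtain s where s: "\<tau> x = h s" using assms(2) by blast
  have "x = \<sigma> (\<tau> x)" using sigma_tau[OF assms(1)] by simp
  also have "\<dots> = h (s - 1)" using s sigma_h by simp
  finally show ?thesis by blast
qed

lemma Y0_hom: "homeomorphic_map Y0 Y0 \<tau>"
proof (rule homeomorphic_map_subtopologies[OF tau_hom])
  show "\<tau> ` (tsp \<inter> (tsp - range h)) = tsp \<inter> (tsp - range h)"
  proof
    show "\<tau> ` (tsp \<inter> (tsp - range h)) \<subseteq> tsp \<inter> (tsp - range h)"
    proof (rule image_subsetI)
      fix x assume x: "x \<in> tsp \<inter> (tsp - range h)"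
      then have "\<tau> x \<notin> range h" using tau_range by blast
      then show "\<tau> x \<in> tsp \<inter> (tsp - range h)" using tau_top x by blast
    qed
    show "tsp \<inter> (tsp - range h) \<subseteq> \<tau> ` (tsp \<inter> (tsp - range h))"
    proof
      fix y assume y: "y \<in> tsp \<inter> (tsp - range h)"
      have yt: "y \<in> tsp" and yr: "y \<notin> range h" using y by auto
      have "\<sigma> y \<notin> range h"
      proof
        assume "\<sigma> y \<in> range h"
        then obtain s where "\<sigma> y = h s" by blast
        then have "\<tau> (\<sigma> y) = h (s+1)" using tau_h by simp
        then show False using yr tau_sigma[OF yt] by simp
      qed
      moreover have "\<tau> (\<sigma> y) = y" using tau_sigma[OF yt] .
      moreover have "\<sigma> y \<in> tsp" using sigma_top[OF yt] .
      ultimately show "y \<in> \<tau> ` (tsp \<inter> (tsp - range h))"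
        by (intro image_eqI[of y \<tau> "\<sigma> y"]) auto
    qed
  qed
qed

lemma rR_tau: assumes x: "x \<in> tsp" shows "rR T h (\<tau> x) = rR T h x + 1"
proof (cases "x \<in> range h")
  case True
  then obtain t where "x = h t" by blast
  then show ?thesis by (simp add: tau_h rR_h)
next
  case False
  have tx: "\<tau> x \<notin> range h" using False tau_range x by blast
  let ?C = "ccT x"
  have C: "ccT (\<tau> x) = \<tau> ` ?C" unfolding ccT_def
    by (rule homeomorphic_map_connected_component_of[OF Y0_hom]) (use x False in auto)
  have Ct: "?C \<subseteq> tsp" using connected_component_of_subset_topspace[of Y0 x] by (auto simp: ccT_def)
  have cl: "T closure_of (\<tau> ` ?C) = \<tau> ` (T closure_of ?C)"
    by (rule homeomorphic_map_closure_of[OF tau_hom Ct])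
  let ?t = "rR T h x"
  have "h ?t \<in> T closure_of ?C" using rR_cc_ex[OF x False] .
  then have "\<tau> (h ?t) \<in> \<tau> ` (T closure_of ?C)" by (rule imageI)
  then have "h (?t + 1) \<in> T closure_of (ccT (\<tau> x))"
    using C cl tau_h by simp
  then show ?thesis by (rule rR_cc[OF tau_top[OF x] tx])
qed

lemma rR_sigma: assumes x: "x \<in> tsp" shows "rR T h (\<sigma> x) = rR T h x - 1"
  using rR_tau[OF sigma_top[OF x]] tau_sigma[OF x] by simp

lemma rR_sh: assumes x: "x \<in> tsp" shows "rR T h (sh m x) = rR T h x + of_int m"
proof (induction m rule: int_induct[where k=0])
  case base then show ?case by simp
next
  case (step1 i)
  have "rR T h (sh (i+1) x) = rR T h (\<tau> (sh i x))" using sh_succ[OF x, of i] by (rule arg_cong)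
  also have "\<dots> = rR T h (sh i x) + 1" by (rule rR_tau[OF sh_top[OF x]])
  also have "\<dots> = rR T h x + of_int (i+1)" using step1(2) by simp
  finally show ?case .
next
  case (step2 i)
  have "rR T h (sh (i-1) x) = rR T h (\<sigma> (sh i x))" using sh_pred[OF x, of i] by (rule arg_cong)
  also have "\<dots> = rR T h (sh i x) - 1" by (rule rR_sigma[OF sh_top[OF x]])
  also have "\<dots> = rR T h x + of_int (i-1)" using step2(2) by simp
  finally show ?case .
qed

lemma XX_tsp: "XXs \<subseteq> tsp" unfolding XX_def using closure_of_subset_topspace by blast

lemma XX_rigid: assumes "x \<in> XXs" "sh m x \<in> XXs" shows "m = 0"
proof -
  have x: "x \<in> tsp" using assms XX_tsp by blast
  have "rR T h x \<in> {0..<1}" "rR T h (sh m x) \<in> {0..<1}" using assms unfolding XX_def by auto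
  then have "rR T h x \<in> {0..<1}" "rR T h x + of_int m \<in> {0..<1}" using rR_sh[OF x] by auto
  then have "of_int m < (1::real)" "of_int m > (-1::real)" by auto
  then show ?thesis by linarith
qed

lemma XX_ITR: "XXs \<inter> ITR = {}"
  unfolding XX_def using closure_of_complement[of T "TRs"] by blast

end


context setting
begin

abbreviation "Xs i \<equiv> \<gamma> i ` {0..1}"
abbreviation "R01 \<equiv> subtopology euclideanreal {0..(1::real)}"

definition Is where "Is = (SOME I. (tsp - TRs) \<inter> {x \<in> tsp. rR T h x \<in> {0..<1}} = (\<Union>i\<in>\<Lambda>. I i) \<and>
        (\<forall>i\<in>\<Lambda>. (\<exists>J::real set. is_interval J \<and>
                      subtopology T (I i) homeomorphic_space subtopology euclideanreal J) \<and>
                  T closure_of (I i) = \<gamma> i ` {0..1}))"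

definition Qsun :: "('i \<Rightarrow> 'a set) \<Rightarrow> bool" where
  "Qsun I = ((tsp - TRs) \<inter> {x \<in> tsp. rR T h x \<in> {0..<1}} = (\<Union>i\<in>\<Lambda>. I i) \<and>
        (\<forall>i\<in>\<Lambda>. (\<exists>J::real set. is_interval J \<and>
                      subtopology T (I i) homeomorphic_space subtopology euclideanreal J) \<and>
                  T closure_of (I i) = \<gamma> i ` {0..1}))"
definition CDsun :: bool where
  "CDsun = ((\<forall>i\<in>\<Lambda>. homeomorphic_map (subtopology euclideanreal {0..1})
                      (subtopology T (\<gamma> i ` {0..1})) (\<gamma> i) \<and>
                  \<gamma> i ` {0..1} \<inter> TR T h F = {\<gamma> i 0}) \<and>
        (\<forall>i\<in>\<Lambda>. \<forall>j\<in>\<Lambda>. i \<noteq> j \<longrightarrow> \<gamma> i ` {0..1} \<inter> \<gamma> j ` {0..1} = {}))"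

lemma sun_unf: "finite \<Lambda> \<and> (\<exists>I. Qsun I \<and> CDsun)"
  using sun unfolding sun_like_def Qsun_def CDsun_def by (simp only: conj_assoc)

lemma sun_ex: "\<exists>I. Qsun I \<and> CDsun" using sun_unf by (rule conjunct2)

lemma Is_Q: "Qsun Is"
proof -
  have "\<exists>I. Qsun I" using sun_ex by (rule ex_forward) (rule conjunct1)
  then show ?thesis unfolding Is_def Qsun_def[symmetric] by (rule someI_ex)
qed

lemma sun_CD': "CDsun"
proof -
  obtain I where "Qsun I \<and> CDsun" using sun_ex ..
  then show ?thesis by (rule conjunct2)
qed

lemma Is_prop: "(tsp - TRs) \<inter> {x \<in> tsp. rR T h x \<in> {0..<1}} = (\<Union>i\<in>\<Lambda>. Is i) \<and>
        (\<forall>i\<in>\<Lambda>. (\<exists>J::real set. is_interval J \<and>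
                      subtopology T (Is i) homeomorphic_space subtopology euclideanreal J) \<and>
                  T closure_of (Is i) = \<gamma> i ` {0..1})"
  using Is_Q unfolding Qsun_def .

lemma sun_CD: "(\<forall>i\<in>\<Lambda>. homeomorphic_map (subtopology euclideanreal {0..1})
                      (subtopology T (\<gamma> i ` {0..1})) (\<gamma> i) \<and>
                  \<gamma> i ` {0..1} \<inter> TR T h F = {\<gamma> i 0}) \<and>
        (\<forall>i\<in>\<Lambda>. \<forall>j\<in>\<Lambda>. i \<noteq> j \<longrightarrow> \<gamma> i ` {0..1} \<inter> \<gamma> j ` {0..1} = {})"
  using sun_CD' unfolding CDsun_def .

lemma Is_sub: "i \<in> \<Lambda> \<Longrightarrow> y \<in> Is i \<Longrightarrow> y \<in> tsp \<and> y \<notin> TRs \<and> rR T h y \<in> {0..<1}"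
proof -
  assume "i \<in> \<Lambda>" "y \<in> Is i"
  then have "y \<in> (\<Union>i\<in>\<Lambda>. Is i)" by blast
  then have "y \<in> (tsp - TRs) \<inter> {x \<in> tsp. rR T h x \<in> {0..<1}}" using Is_prop by simp
  then show ?thesis by blast
qed

lemma Is_cl: "i \<in> \<Lambda> \<Longrightarrow> T closure_of (Is i) = Xs i"
  using Is_prop by simp

lemma Xhom: "i \<in> \<Lambda> \<Longrightarrow> homeomorphic_map R01 (subtopology T (Xs i)) (\<gamma> i)"
  using sun_CD by simp

lemma X_TR: "i \<in> \<Lambda> \<Longrightarrow> Xs i \<inter> TRs = {\<gamma> i 0}"
  using sun_CD by simp

lemma X_disj: "i \<in> \<Lambda> \<Longrightarrow> j \<in> \<Lambda> \<Longrightarrow> i \<noteq> j \<Longrightarrow> Xs i \<inter> Xs j = {}"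
  using sun_CD by simp

lemma X_tsp: assumes "i \<in> \<Lambda>" shows "Xs i \<subseteq> tsp"
proof -
  have "\<gamma> i ` topspace R01 = topspace (subtopology T (Xs i))"
    by (rule homeomorphic_imp_surjective_map[OF Xhom[OF assms]])
  then have eq: "Xs i = tsp \<inter> Xs i" by (simp only: topspace_subtopology topspace_euclidean Int_UNIV_left)
  show ?thesis
  proof
    fix x assume "x \<in> Xs i"
    then have "x \<in> tsp \<inter> Xs i" using eq by simp
    then show "x \<in> tsp" by (rule IntD1)
  qed
qed

lemma X_inj: assumes "i \<in> \<Lambda>" shows "inj_on (\<gamma> i) {0..1}"
  using homeomorphic_imp_injective_map[OF Xhom[OF assms]] by simp

lemma X_cont: assumes "i \<in> \<Lambda>" shows "continuous_map R01 T (\<gamma> i)"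
proof -
  have "continuous_map R01 (subtopology T (Xs i)) (\<gamma> i)"
    by (rule homeomorphic_imp_continuous_map[OF Xhom[OF assms]])
  then show ?thesis unfolding continuous_map_in_subtopology by (rule conjunct1)
qed

lemma X_closed: assumes "i \<in> \<Lambda>" shows "closedin T (Xs i)"
  using Is_cl[OF assms] closedin_closure_of[of T "Is i"] by simp

lemma X_seg_closed: assumes "i \<in> \<Lambda>" "0 \<le> a" "b \<le> 1" shows "closedin T (\<gamma> i ` {a..b})"
proof -
  have ab: "{a..b} \<subseteq> {0..1}" using assms by auto
  have c: "closedin euclideanreal {a..b}" unfolding closed_closedin[symmetric] by (rule closed_atLeastAtMost)
  have e: "{a..b} = {a..b} \<inter> {0..1}" using ab by auto
  have "closedin R01 {a..b}"
    unfolding closedin_subtopology by (rule exI[of _ "{a..b}"], rule conjI[OF c e])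
  moreover have "closedin (subtopology T (Xs i)) (\<gamma> i ` {a..b}) \<longleftrightarrow> closedin R01 {a..b}"
    by (rule homeomorphic_map_closedness[OF Xhom[OF assms(1)]]) (use ab in simp)
  ultimately have "closedin (subtopology T (Xs i)) (\<gamma> i ` {a..b})" by simp
  then show ?thesis by (rule closedin_trans_full[OF _ X_closed[OF assms(1)]])
qed

lemma X_notTR: assumes "i \<in> \<Lambda>" "0 < t" "t \<le> 1" shows "\<gamma> i t \<notin> TRs"
proof
  assume "\<gamma> i t \<in> TRs"
  moreover have "\<gamma> i t \<in> Xs i" using assms by auto
  ultimately have "\<gamma> i t \<in> Xs i \<inter> TRs" by (rule IntI[rotated])
  then have "\<gamma> i t = \<gamma> i 0" unfolding X_TR[OF assms(1)] by simp
  moreover have "t \<in> {0..1}" "(0::real) \<in> {0..1}" using assms by auto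
  ultimately have "t = 0" by (rule inj_onD[OF X_inj[OF assms(1)]])
  then show False using assms by simp
qed

lemma X0_TR: assumes "i \<in> \<Lambda>" shows "\<gamma> i 0 \<in> TRs"
proof -
  have "\<gamma> i 0 \<in> Xs i \<inter> TRs" unfolding X_TR[OF assms] by simp
  then show ?thesis by (rule IntD2)
qed

lemma rR_conn:
  assumes "connectedin T K" "K \<subseteq> tsp - range h" "y \<in> K" "x \<in> K"
  shows "rR T h x = rR T h y"
proof -
  have K: "connectedin Y0 K" using assms(1,2) connectedin_subtopology by blast
  have "K \<subseteq> ccT y" unfolding ccT_def by (rule connected_component_of_maximal[OF K assms(3)])
  then have "connected_component_of Y0 y x" using assms(4) unfolding ccT_def by blast
  then have "connected_component_of Y0 y = connected_component_of Y0 x"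
    using connected_component_of_equiv[of Y0 y x] by simp
  then have eq: "ccT y = ccT x" unfolding ccT_def by simp
  have yy: "y \<in> tsp" "y \<notin> range h" and xx: "x \<in> tsp" "x \<notin> range h" using assms by auto
  have "h (rR T h y) \<in> T closure_of (ccT x)" using rR_cc_ex[OF yy] eq by simp
  then show ?thesis by (rule rR_cc[OF xx])
qed

lemma rR_conn_cl:
  assumes "connectedin T K" "K \<subseteq> tsp - range h" "y \<in> K" "h t \<in> T closure_of K"
  shows "rR T h y = t"
proof -
  have K: "connectedin Y0 K" using assms(1,2) connectedin_subtopology by blast
  have "K \<subseteq> ccT y" unfolding ccT_def by (rule connected_component_of_maximal[OF K assms(3)])
  then have "T closure_of K \<subseteq> T closure_of (ccT y)" by (rule closure_of_mono)
  then have "h t \<in> T closure_of (ccT y)" using assms(4) by blast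
  moreover have yy: "y \<in> tsp" "y \<notin> range h" using assms by auto
  ultimately show ?thesis using rR_cc[OF yy(1) yy(2)] by simp
qed

lemma X_XX: assumes i: "i \<in> \<Lambda>" shows "Xs i \<subseteq> XXs"
proof
  fix x assume x: "x \<in> Xs i"
  have Xt: "Xs i \<subseteq> tsp" by (rule X_tsp[OF i])
  have "Is i \<noteq> {}"
  proof
    assume "Is i = {}"
    then have "Xs i = {}" using Is_cl[OF i] by simp
    then show False by auto
  qed
  then obtain y where y: "y \<in> Is i" by blast
  have yp: "y \<in> tsp" "y \<notin> TRs" "rR T h y \<in> {0..<1}" using Is_sub[OF i y] by auto
  have "Is i \<subseteq> tsp" using Is_sub[OF i] by blast
  then have "Is i \<subseteq> T closure_of Is i" by (rule closure_of_subset)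
  then have "Is i \<subseteq> Xs i" using Is_cl[OF i] by simp
  then obtain s where s: "s \<in> {0..1}" "y = \<gamma> i s" using y by blast
  have s0: "s \<noteq> 0" using s yp X0_TR[OF i] by auto
  let ?K = "\<gamma> i ` {0<..1}"
  have cK0: "connectedin R01 {0<..1}"
    by (auto simp: connectedin_subtopology)
  have cK: "connectedin T ?K" by (rule connectedin_continuous_map_image[OF X_cont[OF i] cK0])
  have KR: "?K \<subseteq> tsp - range h"
  proof
    fix z assume "z \<in> ?K"
    then obtain t where t: "0 < t" "t \<le> 1" "z = \<gamma> i t" by auto
    then have "z \<notin> TRs" using X_notTR[OF i] by simp
    moreover have "z \<in> tsp" using t Xt by auto
    ultimately show "z \<in> tsp - range h" using range_h_TR by blast
  qed
  have yK: "y \<in> ?K" using s s0 by auto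
  have rx: "rR T h x = rR T h y"
  proof (cases "x \<in> ?K")
    case True
    then show ?thesis by (rule rR_conn[OF cK KR yK])
  next
    case False
    then have x0: "x = \<gamma> i 0" using x by (auto simp: less_eq_real_def)
    show ?thesis
    proof (cases "x \<in> range h")
      case True
      then obtain t0 where t0: "x = h t0" by blast
      have e: "{0..1} \<inter> {0<..(1::real)} = {0<..1}" by auto
      have "0 \<in> R01 closure_of {0<..1}" by (simp add: closure_of_subtopology e)
      then have "\<gamma> i 0 \<in> \<gamma> i ` (R01 closure_of {0<..1})" by (rule imageI)
      then have "\<gamma> i 0 \<in> T closure_of ?K"
        using continuous_map_image_closure_subset[OF X_cont[OF i]] by blast
      then have "h t0 \<in> T closure_of ?K" using x0 t0 by simp
      then have "rR T h y = t0" by (rule rR_conn_cl[OF cK KR yK])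
      then show ?thesis using t0 rR_h by simp
    next
      case False
      have cX0: "connectedin R01 {0..1}" by (simp add: connectedin_subtopology)
      have cX: "connectedin T (Xs i)" by (rule connectedin_continuous_map_image[OF X_cont[OF i] cX0])
      have XR: "Xs i \<subseteq> tsp - range h"
      proof
        fix z assume z: "z \<in> Xs i"
        show "z \<in> tsp - range h"
        proof (cases "z \<in> ?K")
          case True then show ?thesis using KR by blast
        next
          case False
          then have "z = \<gamma> i 0" using z by (auto simp: less_eq_real_def)
          then show ?thesis using x0 \<open>x \<notin> range h\<close> Xt z by auto
        qed
      qed
      have "y \<in> Xs i" using yK by auto
      then show ?thesis using rR_conn[OF cX XR _ x] by blast
    qed
  qed
  have "Is i \<subseteq> tsp - TRs" using Is_sub[OF i] by blast
  then have "T closure_of Is i \<subseteq> T closure_of (tsp - TRs)" by (rule closure_of_mono)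
  then have "Xs i \<subseteq> T closure_of (tsp - TRs)" using Is_cl[OF i] by simp
  then show "x \<in> XXs" unfolding XX_def using x rx yp Xt by auto
qed

lemma X_ITR: "i \<in> \<Lambda> \<Longrightarrow> Xs i \<inter> ITR = {}"
  using X_XX XX_ITR by blast

end


context setting
begin

abbreviation "pZ \<equiv> plusZ T \<tau>"
abbreviation "cy \<equiv> cyl T h \<tau> F"

definition Sw :: "'a set list \<Rightarrow> 'a set" where
  "Sw w = {x \<in> tsp. \<forall>i<length w. (F ^^ i) x \<in> pZ (w ! i)}"
definition Dw :: "'a set list \<Rightarrow> 'a set" where
  "Dw w = (F ^^ (length w - 1)) ` Sw w"
definition G :: "'a set \<Rightarrow> 'a set \<Rightarrow> 'a set" where
  "G c A = F ` pZ c \<inter> pZ A \<inter> XXs"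

lemma cy_Dw: "cy w = Dw w \<inter> XXs"
  unfolding cyl_def Dw_def Sw_def by simp

definition BP1 :: bool where
  "BP1 = (\<forall>A\<in>P. A \<noteq> {} \<and> l A \<in> \<Lambda> \<and>
        (\<exists>i\<in>\<Lambda>. \<exists>a b. 0 \<le> a \<and> a \<le> b \<and> b \<le> 1 \<and> A = \<gamma> i ` {a..b} \<and>
            F (\<gamma> i a) = shift T \<tau> (p A) (\<gamma> (l A) 0)) \<and>
        F ` A \<subseteq> (shift T \<tau> (p A) ` (\<gamma> (l A) ` {0..1})) \<union> (T interior_of TR T h F))"
definition BP2 :: bool where
  "BP2 = (\<forall>A\<in>P. \<forall>B\<in>P. A \<noteq> B \<longrightarrow> A \<inter> B = {})"

lemma bp_unf: "finite P \<and> BP1 \<and> BP2 \<and> F ` (XX T h F - \<Union>P) \<inter> plusZ T \<tau> (XX T h F) = {}"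
  using bp unfolding basic_partition_def BP1_def BP2_def .

lemma BP1: "BP1" using bp_unf by (elim conjE)
lemma BP2: "BP2" using bp_unf by (elim conjE)

lemma P_props: assumes "A \<in> P"
  shows "A \<noteq> {} \<and> l A \<in> \<Lambda> \<and>
        (\<exists>i\<in>\<Lambda>. \<exists>a b. 0 \<le> a \<and> a \<le> b \<and> b \<le> 1 \<and> A = \<gamma> i ` {a..b} \<and>
            F (\<gamma> i a) = sh (p A) (\<gamma> (l A) 0)) \<and>
        F ` A \<subseteq> (sh (p A) ` Xs (l A)) \<union> ITR"
  using BP1 assms unfolding BP1_def by (rule bspec)

lemma P_lA: "A \<in> P \<Longrightarrow> l A \<in> \<Lambda>" using P_props by blast
lemma P_ne: "A \<in> P \<Longrightarrow> A \<noteq> {}" using P_props by blast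
lemma P_F: "A \<in> P \<Longrightarrow> F ` A \<subseteq> (sh (p A) ` Xs (l A)) \<union> ITR" using P_props by blast
lemma P_rep: assumes "A \<in> P"
  obtains i a b where "i \<in> \<Lambda>" "0 \<le> a" "a \<le> b" "b \<le> 1" "A = \<gamma> i ` {a..b}"
    "F (\<gamma> i a) = sh (p A) (\<gamma> (l A) 0)"
proof -
  have "\<exists>i\<in>\<Lambda>. \<exists>a b. 0 \<le> a \<and> a \<le> b \<and> b \<le> 1 \<and> A = \<gamma> i ` {a..b} \<and>
            F (\<gamma> i a) = sh (p A) (\<gamma> (l A) 0)" using P_props[OF assms] by (elim conjE)
  then show ?thesis using that by blast
qed

lemma P_disj: "A \<in> P \<Longrightarrow> B \<in> P \<Longrightarrow> A \<noteq> B \<Longrightarrow> A \<inter> B = {}"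
  using BP2 unfolding BP2_def by blast

lemma P_X: assumes "A \<in> P" obtains i where "i \<in> \<Lambda>" "A \<subseteq> Xs i"
proof -
  obtain i a b where r: "i \<in> \<Lambda>" "0 \<le> a" "a \<le> b" "b \<le> 1" "A = \<gamma> i ` {a..b}"
    by (rule P_rep[OF assms])
  have "{a..b} \<subseteq> {0..1}" using r by auto
  then have "\<gamma> i ` {a..b} \<subseteq> Xs i" by (rule image_mono)
  then have "A \<subseteq> Xs i" using r(5) by simp
  then show ?thesis by (rule that[OF r(1)])
qed

lemma P_XX: assumes "A \<in> P" shows "A \<subseteq> XXs"
proof -
  obtain i where "i \<in> \<Lambda>" "A \<subseteq> Xs i" by (rule P_X[OF assms])
  then show ?thesis using X_XX by blast
qed
lemma P_tsp: "A \<in> P \<Longrightarrow> A \<subseteq> tsp"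
  using P_XX XX_tsp by blast

lemma pZ_mem: "x \<in> pZ A \<longleftrightarrow> (\<exists>m a. a \<in> A \<and> x = sh m a)"
  unfolding plusZ_def by blast

lemma pZ_tsp: "A \<subseteq> tsp \<Longrightarrow> pZ A \<subseteq> tsp"
  unfolding plusZ_def using sh_top by blast

lemma pZ_sh: assumes "A \<subseteq> tsp" "x \<in> pZ A" shows "sh m x \<in> pZ A"
proof -
  obtain q a where a: "a \<in> A" "x = sh q a" using assms(2) pZ_mem by blast
  have "sh m x = sh (m+q) a" using a assms(1) sh_add by blast
  then show ?thesis using a pZ_mem by blast
qed

lemma pZ_self: "A \<subseteq> pZ A"
proof
  fix x assume "x \<in> A"
  moreover have "x = sh 0 x" by simp
  ultimately show "x \<in> pZ A" using pZ_mem by blast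
qed

lemma pZ_XX: assumes "A \<subseteq> XXs" shows "pZ A \<inter> XXs = A"
proof
  show "pZ A \<inter> XXs \<subseteq> A"
  proof
    fix x assume x: "x \<in> pZ A \<inter> XXs"
    then obtain m a where a: "a \<in> A" "x = sh m a" using pZ_mem by blast
    then have "m = 0" using XX_rigid[of a m] assms x by blast
    then show "x \<in> A" using a by simp
  qed
  show "A \<subseteq> pZ A \<inter> XXs" using pZ_self assms by blast
qed

lemma pZ_empty[simp]: "pZ {} = {}" unfolding plusZ_def by simp

lemma Sw_tsp: "Sw w \<subseteq> tsp" unfolding Sw_def by blast

lemma Sw_sh: assumes "set w \<subseteq> P" "x \<in> Sw w" shows "sh m x \<in> Sw w"
proof -
  have x: "x \<in> tsp" using assms(2) Sw_tsp by blast
  have "\<forall>i<length w. (F ^^ i) (sh m x) \<in> pZ (w ! i)"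
  proof (intro allI impI)
    fix i assume i: "i < length w"
    have wi: "w ! i \<subseteq> tsp" using assms(1) i P_tsp nth_mem by blast
    have "(F ^^ i) x \<in> pZ (w ! i)" using assms(2) i unfolding Sw_def by blast
    then have "sh m ((F ^^ i) x) \<in> pZ (w ! i)" by (rule pZ_sh[OF wi])
    then show "(F ^^ i) (sh m x) \<in> pZ (w ! i)" using Fpow_sh[OF x] by simp
  qed
  then show ?thesis using sh_top[OF x] unfolding Sw_def by blast
qed

lemma Dw_sh: assumes "set w \<subseteq> P" "y \<in> Dw w" shows "sh m y \<in> Dw w"
proof -
  obtain x where x: "x \<in> Sw w" "y = (F ^^ (length w - 1)) x" using assms(2) unfolding Dw_def by blast
  have "x \<in> tsp" using x Sw_tsp by blast
  then have "sh m y = (F ^^ (length w - 1)) (sh m x)" using x Fpow_sh by simp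
  then show ?thesis using Sw_sh[OF assms(1) x(1)] unfolding Dw_def by blast
qed

lemma Dw_tsp: "Dw w \<subseteq> tsp"
  unfolding Dw_def using Sw_tsp Fpow_top by blast

lemma Dw_last: assumes "w \<noteq> []" shows "Dw w \<subseteq> pZ (last w)"
proof
  fix y assume "y \<in> Dw w"
  then obtain x where x: "x \<in> Sw w" "y = (F ^^ (length w - 1)) x" unfolding Dw_def by blast
  have "length w - 1 < length w" using assms by simp
  then have "y \<in> pZ (w ! (length w - 1))" using x unfolding Sw_def by blast
  then show "y \<in> pZ (last w)" using assms by (simp add: last_conv_nth)
qed

lemma Dw_eq: assumes "w \<noteq> []" "set w \<subseteq> P" shows "Dw w = pZ (cy w)"
proof
  show "Dw w \<subseteq> pZ (cy w)"
  proof
    fix y assume y: "y \<in> Dw w"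
    then obtain q a where a: "a \<in> last w" "y = sh q a" using Dw_last[OF assms(1)] pZ_mem by blast
    have lP: "last w \<in> P" using assms by auto
    have at: "a \<in> tsp" using a lP P_tsp by blast
    have "sh (-q) y = a" using a at by simp
    moreover have "sh (-q) y \<in> Dw w" by (rule Dw_sh[OF assms(2) y])
    moreover have "a \<in> XXs" using a lP P_XX by blast
    ultimately have "a \<in> cy w" unfolding cy_Dw by simp
    then show "y \<in> pZ (cy w)" using a pZ_mem by blast
  qed
  show "pZ (cy w) \<subseteq> Dw w"
  proof
    fix y assume "y \<in> pZ (cy w)"
    then obtain q a where a: "a \<in> cy w" "y = sh q a" using pZ_mem by blast
    then have "a \<in> Dw w" unfolding cy_Dw by simp
    then show "y \<in> Dw w" using a Dw_sh[OF assms(2)] by simp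
  qed
qed

lemma Sw_snoc: "Sw (w @ [A]) = {x \<in> Sw w. (F ^^ length w) x \<in> pZ A}"
proof -
  have "(\<forall>i<length (w @ [A]). (F ^^ i) x \<in> pZ ((w @ [A]) ! i)) \<longleftrightarrow>
        (\<forall>i<length w. (F ^^ i) x \<in> pZ (w ! i)) \<and> (F ^^ length w) x \<in> pZ A" for x
  proof
    assume H: "\<forall>i<length (w @ [A]). (F ^^ i) x \<in> pZ ((w @ [A]) ! i)"
    have "\<forall>i<length w. (F ^^ i) x \<in> pZ (w ! i)"
    proof (intro allI impI)
      fix i assume "i < length w"
      then show "(F ^^ i) x \<in> pZ (w ! i)" using H[rule_format, of i] by (simp add: nth_append)
    qed
    moreover have "(F ^^ length w) x \<in> pZ A" using H[rule_format, of "length w"] by simp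
    ultimately show "(\<forall>i<length w. (F ^^ i) x \<in> pZ (w ! i)) \<and> (F ^^ length w) x \<in> pZ A" ..
  next
    assume H: "(\<forall>i<length w. (F ^^ i) x \<in> pZ (w ! i)) \<and> (F ^^ length w) x \<in> pZ A"
    show "\<forall>i<length (w @ [A]). (F ^^ i) x \<in> pZ ((w @ [A]) ! i)"
    proof (intro allI impI)
      fix i assume i: "i < length (w @ [A])"
      show "(F ^^ i) x \<in> pZ ((w @ [A]) ! i)"
      proof (cases "i < length w")
        case True then show ?thesis using H by (simp add: nth_append)
      next
        case False
        then have "i = length w" using i by simp
        then show ?thesis using H by simp
      qed
    qed
  qed
  then show ?thesis unfolding Sw_def by blast
qed

lemma Dw_snoc: assumes "w \<noteq> []" shows "Dw (w @ [A]) = F ` Dw w \<inter> pZ A"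
proof -
  let ?n = "length w - 1"
  have n: "length w = Suc ?n" using assms by simp
  have fp: "(F ^^ length w) x = F ((F ^^ ?n) x)" for x using n by (metis comp_apply funpow.simps(2))
  have "Dw (w @ [A]) = (F ^^ length w) ` {x \<in> Sw w. (F ^^ length w) x \<in> pZ A}"
    unfolding Dw_def Sw_snoc by simp
  also have "\<dots> = F ` Dw w \<inter> pZ A"
  proof
    show "(F ^^ length w) ` {x \<in> Sw w. (F ^^ length w) x \<in> pZ A} \<subseteq> F ` Dw w \<inter> pZ A"
    proof
      fix y assume "y \<in> (F ^^ length w) ` {x \<in> Sw w. (F ^^ length w) x \<in> pZ A}"
      then obtain x where x: "x \<in> Sw w" "(F ^^ length w) x \<in> pZ A" "y = (F ^^ length w) x" by blast
      have "(F ^^ ?n) x \<in> Dw w" unfolding Dw_def using x(1) by blast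
      then have y1: "y \<in> F ` Dw w" using x(3) fp by simp
      have "y \<in> pZ A" using x(2) x(3) by simp
      with y1 show "y \<in> F ` Dw w \<inter> pZ A" by (rule IntI)
    qed
    show "F ` Dw w \<inter> pZ A \<subseteq> (F ^^ length w) ` {x \<in> Sw w. (F ^^ length w) x \<in> pZ A}"
    proof
      fix y assume y: "y \<in> F ` Dw w \<inter> pZ A"
      then obtain x where x: "x \<in> Sw w" "y = F ((F ^^ ?n) x)" unfolding Dw_def by blast
      have "y = (F ^^ length w) x" using x fp by simp
      then show "y \<in> (F ^^ length w) ` {x \<in> Sw w. (F ^^ length w) x \<in> pZ A}" using x y by blast
    qed
  qed
  finally show ?thesis .
qed

lemma cy_snoc: assumes "w \<noteq> []" "set w \<subseteq> P" shows "cy (w @ [A]) = G (cy w) A"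
proof -
  have "cy (w @ [A]) = Dw (w @ [A]) \<inter> XXs" by (rule cy_Dw)
  also have "\<dots> = F ` Dw w \<inter> pZ A \<inter> XXs" using Dw_snoc[OF assms(1)] by simp
  also have "\<dots> = F ` pZ (cy w) \<inter> pZ A \<inter> XXs" using Dw_eq[OF assms] by simp
  finally show ?thesis unfolding G_def .
qed

lemma cy_single: assumes "A \<in> P" shows "cy [A] = A"
proof -
  have "Sw [A] = pZ A"
    unfolding Sw_def using pZ_tsp[OF P_tsp[OF assms]] by auto
  then have "Dw [A] = pZ A" unfolding Dw_def by simp
  then show ?thesis unfolding cy_Dw using pZ_XX[OF P_XX[OF assms]] by simp
qed

lemma cy_last: assumes "w \<noteq> []" "set w \<subseteq> P" shows "cy w \<subseteq> last w"
proof -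
  have "last w \<in> P" using assms by auto
  then have "pZ (last w) \<inter> XXs = last w" using pZ_XX P_XX by blast
  then show ?thesis unfolding cy_Dw using Dw_last[OF assms(1)] by blast
qed

lemma G_mono: "c \<subseteq> c' \<Longrightarrow> G c A \<subseteq> G c' A"
  unfolding G_def plusZ_def by blast

lemma G_empty[simp]: "G {} A = {}"
  unfolding G_def by simp

end


context setting
begin

lemma G_char:
  assumes B: "B \<in> P" and A: "A \<in> P" and c: "c \<subseteq> B"
  shows "G c A = {x \<in> A \<inter> Xs (l B). sh (p B) x \<in> F ` c}"
proof
  have lB: "l B \<in> \<Lambda>" by (rule P_lA[OF B])
  show "G c A \<subseteq> {x \<in> A \<inter> Xs (l B). sh (p B) x \<in> F ` c}"
  proof
    fix x assume x: "x \<in> G c A"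
    then have x1: "x \<in> F ` pZ c" and x2: "x \<in> pZ A" and x3: "x \<in> XXs" unfolding G_def by auto
    obtain y' where y': "y' \<in> pZ c" "x = F y'" using x1 by blast
    obtain m y where y: "y \<in> c" "y' = sh m y" using y' pZ_mem by blast
    have yt: "y \<in> tsp" using y c P_tsp[OF B] by blast
    have xe: "x = sh m (F y)" using y' y F_sh[OF yt] by simp
    have "F y \<in> F ` B" using y c by blast
    then have Fy: "F y \<in> sh (p B) ` Xs (l B) \<union> ITR" using P_F[OF B] by blast
    show "x \<in> {x \<in> A \<inter> Xs (l B). sh (p B) x \<in> F ` c}"
    proof (cases "F y \<in> ITR")
      case True
      then have "x \<in> ITR" using xe sh_ITR by simp
      then show ?thesis using x3 XX_ITR by blast
    next
      case False
      then obtain z where z: "z \<in> Xs (l B)" "F y = sh (p B) z" using Fy by blast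
      have zt: "z \<in> tsp" using z X_tsp[OF lB] by blast
      have zX: "z \<in> XXs" using z X_XX[OF lB] by blast
      have "x = sh (m + p B) z" using xe z(2) sh_add[OF zt] by simp
      then have "sh (m + p B) z \<in> XXs" using x3 by simp
      then have "m + p B = 0" using XX_rigid[OF zX] by blast
      then have xz: "x = z" using \<open>x = sh (m + p B) z\<close> by simp
      obtain q a where a: "a \<in> A" "x = sh q a" using x2 pZ_mem by blast
      have aX: "a \<in> XXs" using a P_XX[OF A] by blast
      have "q = 0" using XX_rigid[OF aX] a x3 by blast
      then have "x \<in> A" using a by simp
      moreover have "sh (p B) x \<in> F ` c" using xz z(2) y(1) by (metis imageI)
      ultimately show ?thesis using xz z(1) by blast
    qed
  qed
  show "{x \<in> A \<inter> Xs (l B). sh (p B) x \<in> F ` c} \<subseteq> G c A"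
  proof
    fix x assume x: "x \<in> {x \<in> A \<inter> Xs (l B). sh (p B) x \<in> F ` c}"
    then obtain y where y: "y \<in> c" "sh (p B) x = F y" by blast
    have xt: "x \<in> tsp" using x P_tsp[OF A] by blast
    have yt: "y \<in> tsp" using y c P_tsp[OF B] by blast
    have "x = sh (- p B) (sh (p B) x)" using xt by simp
    also have "\<dots> = F (sh (- p B) y)" using y(2) F_sh[OF yt] by simp
    finally have xe: "x = F (sh (- p B) y)" .
    have "sh (- p B) y \<in> pZ c" using y(1) pZ_mem by blast
    then have "x \<in> F ` pZ c" using xe by blast
    moreover have "x \<in> pZ A" using x pZ_self by blast
    moreover have "x \<in> XXs" using x P_XX[OF A] by blast
    ultimately show "x \<in> G c A" unfolding G_def by blast
  qed
qed

definition downcl :: "real set \<Rightarrow> bool" where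
  "downcl E \<longleftrightarrow> E \<subseteq> {0..1} \<and> (\<forall>s t. t \<in> E \<longrightarrow> 0 \<le> s \<longrightarrow> s \<le> t \<longrightarrow> s \<in> E)"

lemma E_down:
  assumes l: "l0 \<in> \<Lambda>" and Zt: "Z \<subseteq> tsp" and cZ: "connectedin T Z"
    and ZX: "Z \<subseteq> Xs l0 \<union> TRs" and z0: "\<gamma> l0 0 \<in> Z"
  shows "downcl {t \<in> {0..1}. \<gamma> l0 t \<in> Z}"
  unfolding downcl_def
proof (intro conjI allI impI)
  show "{t \<in> {0..1}. \<gamma> l0 t \<in> Z} \<subseteq> {0..1}" by blast
  fix s t assume t: "t \<in> {t \<in> {0..1}. \<gamma> l0 t \<in> Z}" and s0: "0 \<le> s" and st: "s \<le> t"
  show "s \<in> {t \<in> {0..1}. \<gamma> l0 t \<in> Z}"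
  proof (rule ccontr)
    assume ns: "s \<notin> {t \<in> {0..1}. \<gamma> l0 t \<in> Z}"
    have t1: "t \<le> 1" "0 \<le> t" "\<gamma> l0 t \<in> Z" using t by auto
    have s1: "s \<le> 1" using st t1 by simp
    have gs: "\<gamma> l0 s \<notin> Z" using ns s0 s1 by auto
    let ?U = "\<gamma> l0 ` {s..1}"
    let ?V = "\<gamma> l0 ` {0..s} \<union> TRs"
    have cU: "closedin T ?U" by (rule X_seg_closed[OF l s0]) simp
    have cV: "closedin T ?V" by (intro closedin_Un X_seg_closed[OF l] TR_closed) (use s1 in auto)
    have cov: "Z \<subseteq> ?U \<union> ?V"
    proof
      fix z assume z: "z \<in> Z"
      show "z \<in> ?U \<union> ?V"
      proof (cases "z \<in> TRs")
        case True then show ?thesis by blast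
      next
        case False
        then obtain r where r: "r \<in> {0..1}" "z = \<gamma> l0 r" using ZX z by blast
        show ?thesis
        proof (cases "r \<le> s")
          case True then show ?thesis using r by auto
        next
          case False then show ?thesis using r by auto
        qed
      qed
    qed
    have disj: "?U \<inter> ?V \<inter> Z = {}"
    proof (rule ccontr)
      assume "?U \<inter> ?V \<inter> Z \<noteq> {}"
      then obtain z where z: "z \<in> ?U" "z \<in> ?V" "z \<in> Z" by blast
      then obtain r where r: "r \<in> {s..1}" "z = \<gamma> l0 r" by blast
      have "r \<noteq> s" using r z gs by blast
      then have rs: "s < r" using r by auto
      have "z \<notin> TRs" using X_notTR[OF l, of r] r rs s0 by simp
      then obtain r' where r': "r' \<in> {0..s}" "z = \<gamma> l0 r'" using z by blast
      have "r = r'"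
        using inj_onD[OF X_inj[OF l], of r r'] r r' s0 s1 by simp
      then show False using r' rs by simp
    qed
    have "t \<in> {s..1}" using t1 st by simp
    then have "\<gamma> l0 t \<in> ?U" by (rule imageI)
    then have neU: "?U \<inter> Z \<noteq> {}" using t1(3) by blast
    have neV: "?V \<inter> Z \<noteq> {}" using z0 X0_TR[OF l] by blast
    show False
      using cZ unfolding connectedin_closedin using cU cV cov disj neU neV by blast
  qed
qed

lemma downcl_interval: "downcl E \<Longrightarrow> is_interval E"
  unfolding downcl_def is_interval_1 by force

definition Inv :: "'a set \<Rightarrow> 'a set \<Rightarrow> bool" where
  "Inv c B \<longleftrightarrow> c = {} \<or> (\<exists>i a b J. i \<in> \<Lambda> \<and> 0 \<le> a \<and> a \<le> b \<and> b \<le> 1 \<and> B = \<gamma> i ` {a..b} \<and>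
      F (\<gamma> i a) = sh (p B) (\<gamma> (l B) 0) \<and> is_interval J \<and> a \<in> J \<and> J \<subseteq> {a..b} \<and> c = \<gamma> i ` J)"

lemma Inv_base: assumes "A \<in> P" shows "Inv A A"
proof -
  obtain i a b where r: "i \<in> \<Lambda>" "0 \<le> a" "a \<le> b" "b \<le> 1" "A = \<gamma> i ` {a..b}"
    "F (\<gamma> i a) = sh (p A) (\<gamma> (l A) 0)" by (rule P_rep[OF assms])
  have "is_interval {a..b}" by (rule is_interval_cc)
  then show ?thesis unfolding Inv_def
    by (intro disjI2 exI[of _ i] exI[of _ a] exI[of _ b] exI[of _ "{a..b}"] conjI) (use r in simp_all)
qed

lemma G_shape:
  assumes B: "B \<in> P" and I: "Inv c B" and ne: "c \<noteq> {}"
  shows "\<exists>E. downcl E \<and> (\<forall>A\<in>P. G c A = A \<inter> \<gamma> (l B) ` E)"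
proof -
  obtain i a b J where r: "i \<in> \<Lambda>" "0 \<le> a" "a \<le> b" "b \<le> 1" "B = \<gamma> i ` {a..b}"
      "F (\<gamma> i a) = sh (p B) (\<gamma> (l B) 0)" "is_interval J" "a \<in> J" "J \<subseteq> {a..b}" "c = \<gamma> i ` J"
    using I ne unfolding Inv_def by blast
  let ?l = "l B" and ?p = "p B"
  have lB: "?l \<in> \<Lambda>" by (rule P_lA[OF B])
  have cB: "c \<subseteq> B" using r by auto
  have ct: "c \<subseteq> tsp" using cB P_tsp[OF B] by blast
  define Z where "Z = sh (- ?p) ` F ` c"
  have Zt: "Z \<subseteq> tsp" unfolding Z_def using sh_top F_top ct by blast
  have J01: "J \<subseteq> {0..1}" using r by auto
  have cJ: "connectedin R01 J"
    using r(7) J01 by (simp add: connectedin_subtopology is_interval_connected_1)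
  have cc: "connectedin T c" unfolding r(10) by (rule connectedin_continuous_map_image[OF X_cont[OF r(1)] cJ])
  have cZ: "connectedin T Z" unfolding Z_def
    by (rule connectedin_continuous_map_image[OF sh_cont connectedin_continuous_map_image[OF contF cc]])
  have ZX: "Z \<subseteq> Xs ?l \<union> TRs"
  proof
    fix z assume "z \<in> Z"
    then obtain y where y: "y \<in> c" "z = sh (- ?p) (F y)" unfolding Z_def by blast
    have "F y \<in> sh ?p ` Xs ?l \<union> ITR" using P_F[OF B] y cB by blast
    then show "z \<in> Xs ?l \<union> TRs"
    proof
      assume "F y \<in> sh ?p ` Xs ?l"
      then obtain x where x: "x \<in> Xs ?l" "F y = sh ?p x" by blast
      have "x \<in> tsp" using x X_tsp[OF lB] by blast
      then have "z = x" using x y by simp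
      then show ?thesis using x by blast
    next
      assume "F y \<in> ITR"
      then have "z \<in> ITR" using y sh_ITR by simp
      then have "z \<in> TRs" using interior_of_subset[of T TRs] by (rule subsetD[rotated])
      then show ?thesis by (rule UnI2)
    qed
  qed
  have g0t: "\<gamma> ?l 0 \<in> tsp" using X_tsp[OF lB] by auto
  have z0: "\<gamma> ?l 0 \<in> Z"
  proof -
    have "\<gamma> i a \<in> c" using r by blast
    then have "F (\<gamma> i a) \<in> F ` c" by blast
    then have "sh (- ?p) (sh ?p (\<gamma> ?l 0)) \<in> Z" unfolding Z_def using r(6) by (metis imageI)
    then show ?thesis using g0t by simp
  qed
  have memZ: "x \<in> Xs ?l \<Longrightarrow> (sh ?p x \<in> F ` c) = (x \<in> Z)" for x
  proof -
    assume "x \<in> Xs ?l"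
    then have xt: "x \<in> tsp" using X_tsp[OF lB] by blast
    show ?thesis
    proof
      assume "sh ?p x \<in> F ` c"
      then have "sh (- ?p) (sh ?p x) \<in> Z" unfolding Z_def by blast
      then show "x \<in> Z" using xt by simp
    next
      assume "x \<in> Z"
      then obtain y where y: "y \<in> c" "x = sh (- ?p) (F y)" unfolding Z_def by blast
      have "F y \<in> tsp" using y ct F_top by blast
      then have "sh ?p x = F y" using y by simp
      then show "sh ?p x \<in> F ` c" using y by blast
    qed
  qed
  define E where "E = {t \<in> {0..1}. \<gamma> ?l t \<in> Z}"
  have dE: "downcl E" unfolding E_def by (rule E_down[OF lB Zt cZ ZX z0])
  have "\<forall>A\<in>P. G c A = A \<inter> \<gamma> ?l ` E"
  proof
    fix A assume A: "A \<in> P"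
    have "G c A = {x \<in> A \<inter> Xs ?l. sh ?p x \<in> F ` c}" by (rule G_char[OF B A cB])
    also have "\<dots> = {x \<in> A \<inter> Xs ?l. x \<in> Z}" using memZ by blast
    also have "\<dots> = A \<inter> \<gamma> ?l ` E" unfolding E_def by blast
    finally show "G c A = A \<inter> \<gamma> ?l ` E" .
  qed
  then show ?thesis using dE by blast
qed

lemma downcl_mem: "downcl E \<Longrightarrow> t \<in> E \<Longrightarrow> 0 \<le> s \<Longrightarrow> s \<le> t \<Longrightarrow> s \<in> E"
  unfolding downcl_def by blast

lemma seg_E:
  assumes l: "l0 \<in> \<Lambda>" and dE: "downcl E" and ab: "0 \<le> a" "a \<le> b" "b \<le> 1"
  shows "\<gamma> l0 ` {a..b} \<inter> \<gamma> l0 ` E = \<gamma> l0 ` ({a..b} \<inter> E)"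
proof -
  have "E \<subseteq> {0..1}" using dE unfolding downcl_def by blast
  moreover have "{a..b} \<subseteq> {0..1}" using ab by auto
  ultimately show ?thesis using inj_on_image_Int[OF X_inj[OF l]] by blast
qed

lemma Inv_step:
  assumes B: "B \<in> P" and A: "A \<in> P" and I: "Inv c B"
  shows "Inv (G c A) A"
proof (cases "c = {}")
  case True then show ?thesis unfolding Inv_def by simp
next
  case False
  obtain E where dE: "downcl E" and GE: "\<forall>A\<in>P. G c A = A \<inter> \<gamma> (l B) ` E"
    using G_shape[OF B I False] by blast
  have GA: "G c A = A \<inter> \<gamma> (l B) ` E" using GE A by blast
  have lB: "l B \<in> \<Lambda>" by (rule P_lA[OF B])
  obtain i a b where r: "i \<in> \<Lambda>" "0 \<le> a" "a \<le> b" "b \<le> 1" "A = \<gamma> i ` {a..b}"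
    "F (\<gamma> i a) = sh (p A) (\<gamma> (l A) 0)" by (rule P_rep[OF A])
  show ?thesis
  proof (cases "i = l B")
    case False
    have "{a..b} \<subseteq> {0..1}" using r by auto
    then have "\<gamma> i ` {a..b} \<subseteq> Xs i" by (rule image_mono)
    then have s1: "A \<subseteq> Xs i" using r(5) by simp
    have "E \<subseteq> {0..1}" using dE unfolding downcl_def by (rule conjunct1)
    then have s2: "\<gamma> (l B) ` E \<subseteq> Xs (l B)" by (rule image_mono)
    have "A \<inter> \<gamma> (l B) ` E \<subseteq> Xs i \<inter> Xs (l B)" by (rule Int_mono[OF s1 s2])
    then have "G c A = {}" using GA X_disj[OF r(1) lB False] by simp
    then show ?thesis unfolding Inv_def by simp
  next
    case True
    have GA2: "G c A = \<gamma> i ` ({a..b} \<inter> E)"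
      using GA r(5) seg_E[OF r(1) _ r(2-4)] dE True by simp
    show ?thesis
    proof (cases "{a..b} \<inter> E = {}")
      case True then show ?thesis using GA2 unfolding Inv_def by simp
    next
      case False
      then obtain t where t: "t \<in> {a..b}" "t \<in> E" by blast
      have aE: "a \<in> E" using downcl_mem[OF dE t(2) r(2)] t by simp
      have "is_interval ({a..b} \<inter> E)"
        by (rule is_interval_Int[OF is_interval_cc downcl_interval[OF dE]])
      moreover have "a \<in> {a..b} \<inter> E" using aE r by simp
      moreover have "{a..b} \<inter> E \<subseteq> {a..b}" by blast
      ultimately show ?thesis unfolding Inv_def
        by (intro disjI2 exI[of _ i] exI[of _ a] exI[of _ b] exI[of _ "{a..b} \<inter> E"] conjI) (use r GA2 in simp_all)
    qed
  qed
qed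

lemma partial_unique:
  assumes B: "B \<in> P" and I: "Inv c B" and A1: "A1 \<in> P" and A2: "A2 \<in> P"
    and n1: "G c A1 \<noteq> {}" "G c A1 \<noteq> A1" and n2: "G c A2 \<noteq> {}" "G c A2 \<noteq> A2"
  shows "A1 = A2"
proof -
  have ne: "c \<noteq> {}" using n1 by auto
  obtain E where dE: "downcl E" and GE: "\<forall>A\<in>P. G c A = A \<inter> \<gamma> (l B) ` E"
    using G_shape[OF B I ne] by blast
  have lB: "l B \<in> \<Lambda>" by (rule P_lA[OF B])
  have key: "\<exists>a b. 0 \<le> a \<and> a \<le> b \<and> b \<le> 1 \<and> A = \<gamma> (l B) ` {a..b} \<and> a \<in> E \<and> b \<notin> E"
    if A: "A \<in> P" and nA: "G c A \<noteq> {}" "G c A \<noteq> A" for A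
  proof -
    have GA: "G c A = A \<inter> \<gamma> (l B) ` E" using GE A by blast
    obtain i a b where r: "i \<in> \<Lambda>" "0 \<le> a" "a \<le> b" "b \<le> 1" "A = \<gamma> i ` {a..b}"
      by (rule P_rep[OF A])
    have il: "i = l B"
    proof (rule ccontr)
      assume ne: "i \<noteq> l B"
      have "{a..b} \<subseteq> {0..1}" using r by auto
      then have "\<gamma> i ` {a..b} \<subseteq> Xs i" by (rule image_mono)
      then have s1: "A \<subseteq> Xs i" using r(5) by simp
      have "E \<subseteq> {0..1}" using dE unfolding downcl_def by (rule conjunct1)
      then have s2: "\<gamma> (l B) ` E \<subseteq> Xs (l B)" by (rule image_mono)
      have "A \<inter> \<gamma> (l B) ` E \<subseteq> Xs i \<inter> Xs (l B)" by (rule Int_mono[OF s1 s2])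
      then have "G c A = {}" using GA X_disj[OF r(1) lB ne] by simp
      then show False using nA by simp
    qed
    have GA2: "G c A = \<gamma> i ` ({a..b} \<inter> E)"
      using GA r(5) seg_E[OF r(1) _ r(2-4)] dE il by simp
    then obtain t where t: "t \<in> {a..b}" "t \<in> E" using nA by blast
    have aE: "a \<in> E" using downcl_mem[OF dE t(2) r(2)] t by simp
    have bE: "b \<notin> E"
    proof
      assume "b \<in> E"
      then have "{a..b} \<subseteq> E" using downcl_mem[OF dE] r by auto
      then have "G c A = A" using GA2 r(5) by (simp add: Int_absorb2)
      then show False using nA by simp
    qed
    show ?thesis using r il aE bE by blast
  qed
  obtain a1 b1 where k1: "0 \<le> a1" "a1 \<le> b1" "b1 \<le> 1" "A1 = \<gamma> (l B) ` {a1..b1}" "a1 \<in> E" "b1 \<notin> E"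
    using key[OF A1 n1] by blast
  obtain a2 b2 where k2: "0 \<le> a2" "a2 \<le> b2" "b2 \<le> 1" "A2 = \<gamma> (l B) ` {a2..b2}" "a2 \<in> E" "b2 \<notin> E"
    using key[OF A2 n2] by blast
  have "A1 \<inter> A2 \<noteq> {}"
  proof (cases "a1 \<le> a2")
    case True
    have "a2 < b1"
    proof (rule ccontr)
      assume "\<not> a2 < b1"
      then have "b1 \<in> E" using downcl_mem[OF dE k2(5)] k1 by simp
      then show False using k1 by simp
    qed
    then have "\<gamma> (l B) a2 \<in> A1" "\<gamma> (l B) a2 \<in> A2" using k1 k2 True by auto
    then show ?thesis by blast
  next
    case False
    have "a1 < b2"
    proof (rule ccontr)
      assume "\<not> a1 < b2"
      then have "b2 \<in> E" using downcl_mem[OF dE k1(5)] k2 by simp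
      then show False using k2 by simp
    qed
    then have "\<gamma> (l B) a1 \<in> A1" "\<gamma> (l B) a1 \<in> A2" using k1 k2 False by auto
    then show ?thesis by blast
  qed
  then show ?thesis using P_disj[OF A1 A2] by blast
qed

lemma Inv_cy: "w \<noteq> [] \<Longrightarrow> set w \<subseteq> P \<Longrightarrow> Inv (cy w) (last w)"
proof (induction w rule: rev_induct)
  case Nil then show ?case by simp
next
  case (snoc A w)
  show ?case
  proof (cases "w = []")
    case True
    then show ?thesis using snoc.prems cy_single Inv_base by simp
  next
    case False
    have wP: "set w \<subseteq> P" and AP: "A \<in> P" using snoc.prems by auto
    have "Inv (cy w) (last w)" using snoc.IH[OF False wP] .
    moreover have "last w \<in> P" using False wP by auto
    ultimately have "Inv (G (cy w) A) A" using Inv_step AP by blast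
    then show ?thesis using cy_snoc[OF False wP] by simp
  qed
qed

end


context setting
begin

definition Wd :: "'a set list \<Rightarrow> bool" where "Wd w \<longleftrightarrow> w \<noteq> [] \<and> set w \<subseteq> P"

definition full :: "'a set list \<Rightarrow> nat \<Rightarrow> bool" where
  "full w j \<longleftrightarrow> cy (take (Suc j) w) = w ! j"

lemma cy_append: assumes "Wd w" "set v \<subseteq> P" shows "cy (w @ v) = foldl G (cy w) v"
  using assms(2)
proof (induction v rule: rev_induct)
  case Nil then show ?case by simp
next
  case (snoc A v)
  have "w @ v \<noteq> []" "set (w @ v) \<subseteq> P" using assms snoc.prems unfolding Wd_def by auto
  then have "cy ((w @ v) @ [A]) = G (cy (w @ v)) A" by (rule cy_snoc)
  then show ?case using snoc by simp
qed

lemma foldl_G_mono: "c \<subseteq> c' \<Longrightarrow> foldl G c v \<subseteq> foldl G c' v"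
proof (induction v arbitrary: c c')
  case Nil then show ?case by simp
next
  case (Cons A v)
  then show ?case using G_mono by simp
qed

lemma Wd_take: "Wd w \<Longrightarrow> Wd (take (Suc j) w)"
  unfolding Wd_def by (auto dest: in_set_takeD)
lemma Wd_drop: "Wd w \<Longrightarrow> j < length w \<Longrightarrow> Wd (drop j w)"
  unfolding Wd_def by (auto dest: in_set_dropD)

lemma split_at: assumes "j < length w"
  shows "w = take (Suc j) w @ drop (Suc j) w" "drop j w = [w ! j] @ drop (Suc j) w"
  using assms by (simp_all add: Cons_nth_drop_Suc)

lemma markov: assumes W: "Wd w" and j: "j < length w" and f: "full w j"
  shows "cy w = cy (drop j w)"
proof -
  have P1: "set (drop (Suc j) w) \<subseteq> P" using W unfolding Wd_def by (auto dest: in_set_dropD)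
  have wj: "w ! j \<in> P" using W j unfolding Wd_def by auto
  have "cy w = cy (take (Suc j) w @ drop (Suc j) w)" by simp
  also have "\<dots> = foldl G (cy (take (Suc j) w)) (drop (Suc j) w)"
    by (rule cy_append[OF Wd_take[OF W] P1])
  also have "\<dots> = foldl G (w ! j) (drop (Suc j) w)" using f unfolding full_def by simp
  also have "\<dots> = foldl G (cy [w ! j]) (drop (Suc j) w)" using cy_single[OF wj] by simp
  also have "\<dots> = cy ([w ! j] @ drop (Suc j) w)"
    by (rule cy_append[symmetric]) (use wj P1 in \<open>auto simp: Wd_def\<close>)
  also have "\<dots> = cy (drop j w)" using split_at(2)[OF j] by simp
  finally show ?thesis .
qed

lemma cy_mono_drop: assumes W: "Wd w" and i: "i < length w"
  shows "cy w \<subseteq> cy (drop i w)"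
proof -
  have P1: "set (drop (Suc i) w) \<subseteq> P" using W unfolding Wd_def by (auto dest: in_set_dropD)
  have wi: "w ! i \<in> P" using W i unfolding Wd_def by auto
  have "cy (take (Suc i) w) \<subseteq> last (take (Suc i) w)"
    using cy_last Wd_take[OF W] unfolding Wd_def by blast
  also have "last (take (Suc i) w) = w ! i" using i by (simp add: take_Suc_conv_app_nth)
  finally have s: "cy (take (Suc i) w) \<subseteq> cy [w ! i]" using cy_single[OF wi] by simp
  have "cy w = cy (take (Suc i) w @ drop (Suc i) w)" by simp
  also have "\<dots> = foldl G (cy (take (Suc i) w)) (drop (Suc i) w)"
    by (rule cy_append[OF Wd_take[OF W] P1])
  also have "\<dots> \<subseteq> foldl G (cy [w ! i]) (drop (Suc i) w)" by (rule foldl_G_mono[OF s])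
  also have "\<dots> = cy ([w ! i] @ drop (Suc i) w)"
    by (rule cy_append[symmetric]) (use wi P1 in \<open>auto simp: Wd_def\<close>)
  also have "\<dots> = cy (drop i w)" using split_at(2)[OF i] by simp
  finally show ?thesis .
qed

lemma full0: assumes "Wd w" shows "full w 0"
proof -
  have "w ! 0 \<in> P" using assms unfolding Wd_def by (cases w) auto
  moreover have "take (Suc 0) w = [w ! 0]" using assms unfolding Wd_def by (cases w) auto
  ultimately show ?thesis unfolding full_def using cy_single by simp
qed

lemma full_transfer:
  assumes W: "Wd w" and j0: "j0 \<le> j" and j: "j < length w" and f: "full w j0"
  shows "full w j \<longleftrightarrow> full (drop j0 w) (j - j0)"
proof -
  have Wt: "Wd (take (Suc j) w)" by (rule Wd_take[OF W])
  have ft: "full (take (Suc j) w) j0" using f j0 j unfolding full_def by (simp add: min_def)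
  have "cy (take (Suc j) w) = cy (drop j0 (take (Suc j) w))"
    by (rule markov[OF Wt _ ft]) (use j0 j in simp)
  also have "drop j0 (take (Suc j) w) = take (Suc (j - j0)) (drop j0 w)"
    using j0 by (simp add: drop_take Suc_diff_le)
  finally have e: "cy (take (Suc j) w) = cy (take (Suc (j - j0)) (drop j0 w))" .
  have "drop j0 w ! (j - j0) = w ! j" using j0 j by simp
  then show ?thesis unfolding full_def using e by simp
qed

lemma full_snoc: assumes "j < length w" shows "full (w @ [A]) j \<longleftrightarrow> full w j"
  using assms unfolding full_def by (simp add: nth_append)

definition suf :: "'a set list \<Rightarrow> nat \<Rightarrow> 'a set list" where
  "suf w k = drop (length w - Suc k) w"

definition cs :: "'a set list \<Rightarrow> 'a set list \<Rightarrow> nat \<Rightarrow> bool" where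
  "cs As Bs k \<longleftrightarrow> k < length As \<and> k < length Bs \<and> suf As k = suf Bs k \<and>
     full As (length As - Suc k) \<and> full Bs (length Bs - Suc k)"

lemma suf_len: "k < length w \<Longrightarrow> length (suf w k) = Suc k"
  unfolding suf_def by simp

lemma suf_nth: "k < length w \<Longrightarrow> j \<le> k \<Longrightarrow> suf w k ! j = w ! (length w - Suc k + j)"
  unfolding suf_def by simp

lemma suf_eq_iff:
  assumes a: "k < length As" and b: "k < length Bs"
  shows "suf As k = suf Bs k \<longleftrightarrow> (\<forall>i\<le>k. As ! (length As - 1 - i) = Bs ! (length Bs - 1 - i))"
proof
  assume e: "suf As k = suf Bs k"
  show "\<forall>i\<le>k. As ! (length As - 1 - i) = Bs ! (length Bs - 1 - i)"
  proof (intro allI impI)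
    fix i assume i: "i \<le> k"
    have "As ! (length As - 1 - i) = suf As k ! (k - i)"
      using suf_nth[OF a, of "k - i"] i a by simp
    also have "\<dots> = suf Bs k ! (k - i)" using e by simp
    also have "\<dots> = Bs ! (length Bs - 1 - i)"
      using suf_nth[OF b, of "k - i"] i b by simp
    finally show "As ! (length As - 1 - i) = Bs ! (length Bs - 1 - i)" .
  qed
next
  assume H: "\<forall>i\<le>k. As ! (length As - 1 - i) = Bs ! (length Bs - 1 - i)"
  show "suf As k = suf Bs k"
  proof (rule nth_equalityI)
    show "length (suf As k) = length (suf Bs k)" using suf_len a b by simp
    fix j assume "j < length (suf As k)"
    then have j: "j \<le> k" using suf_len[OF a] by simp
    have "suf As k ! j = As ! (length As - 1 - (k - j))" using suf_nth[OF a j] j a by simp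
    also have "\<dots> = Bs ! (length Bs - 1 - (k - j))" using H by simp
    also have "\<dots> = suf Bs k ! j" using suf_nth[OF b j] j b by simp
    finally show "suf As k ! j = suf Bs k ! j" .
  qed
qed

lemma csim_iff: assumes "As \<noteq> []" "Bs \<noteq> []"
  shows "csim T h \<tau> F As Bs \<longleftrightarrow> (\<exists>k. cs As Bs k)"
proof
  assume "csim T h \<tau> F As Bs"
  then obtain k where k: "k \<le> min (length As - 1) (length Bs - 1)"
    "\<forall>i\<le>k. As ! (length As - 1 - i) = Bs ! (length Bs - 1 - i)"
    "cy (take (length As - 1 - k + 1) As) = As ! (length As - 1 - k)"
    "Bs ! (length Bs - 1 - k) = cy (take (length Bs - 1 - k + 1) Bs)"
    unfolding csim_def Let_def by blast
  have la: "length As > 0" "length Bs > 0" using assms by auto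
  have k1: "k \<le> length As - 1" "k \<le> length Bs - 1" using k(1) by auto
  have a: "k < length As" using la(1) k1(1) by arith
  have b: "k < length Bs" using la(2) k1(2) by arith
  have "suf As k = suf Bs k" using suf_eq_iff[OF a b] k(2) by simp
  moreover have "full As (length As - Suc k)" using k(3) a unfolding full_def
    by (simp add: Suc_diff_Suc)
  moreover have "full Bs (length Bs - Suc k)" using k(4) b unfolding full_def
    by (simp add: Suc_diff_Suc)
  ultimately show "\<exists>k. cs As Bs k" unfolding cs_def using a b by blast
next
  assume "\<exists>k. cs As Bs k"
  then obtain k where k: "cs As Bs k" by blast
  have a: "k < length As" and b: "k < length Bs" using k unfolding cs_def by auto
  have e: "suf As k = suf Bs k" using k unfolding cs_def by blast
  have h2: "\<forall>i\<le>k. As ! (length As - 1 - i) = Bs ! (length Bs - 1 - i)"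
    using suf_eq_iff[OF a b] e by simp
  have f1: "cy (take (length As - 1 - k + 1) As) = As ! (length As - 1 - k)"
    using k a unfolding cs_def full_def by (simp add: Suc_diff_Suc)
  have f2: "cy (take (length Bs - 1 - k + 1) Bs) = Bs ! (length Bs - 1 - k)"
    using k b unfolding cs_def full_def by (simp add: Suc_diff_Suc)
  have m: "As ! (length As - 1 - k) = Bs ! (length Bs - 1 - k)" using h2 by simp
  have "k \<le> length As - 1" using a by arith
  moreover have "k \<le> length Bs - 1" using b by arith
  ultimately have "k \<le> min (length As - 1) (length Bs - 1)" by simp
  then show "csim T h \<tau> F As Bs" unfolding csim_def Let_def using h2 f1 f2 m by metis
qed

lemma cs_sym: "cs As Bs k \<Longrightarrow> cs Bs As k"
  unfolding cs_def by auto

lemma suf_suf: assumes "k \<le> k1" "k1 < length w" shows "suf w k = drop (k1 - k) (suf w k1)"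
  using assms unfolding suf_def by (simp add: algebra_simps)

lemma cs_full_shift:
  assumes W1: "Wd As" and W2: "Wd Bs" and c: "cs As Bs k1" and k: "k \<le> k1"
  shows "full As (length As - Suc k) \<longleftrightarrow> full Bs (length Bs - Suc k)"
proof -
  have a: "k1 < length As" and b: "k1 < length Bs" and e: "suf As k1 = suf Bs k1"
    and fa: "full As (length As - Suc k1)" and fb: "full Bs (length Bs - Suc k1)"
    using c unfolding cs_def by auto
  have "full As (length As - Suc k) \<longleftrightarrow> full (drop (length As - Suc k1) As) (length As - Suc k - (length As - Suc k1))"
    by (rule full_transfer[OF W1 _ _ fa]) (use k a in auto)
  also have "length As - Suc k - (length As - Suc k1) = k1 - k" using k a by simp
  also have "drop (length As - Suc k1) As = drop (length Bs - Suc k1) Bs" using e unfolding suf_def .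
  also have "full (drop (length Bs - Suc k1) Bs) (k1 - k) \<longleftrightarrow> full Bs (length Bs - Suc k)"
  proof -
    have "full Bs (length Bs - Suc k) \<longleftrightarrow> full (drop (length Bs - Suc k1) Bs) (length Bs - Suc k - (length Bs - Suc k1))"
      by (rule full_transfer[OF W2 _ _ fb]) (use k b in auto)
    also have "length Bs - Suc k - (length Bs - Suc k1) = k1 - k" using k b by simp
    finally show ?thesis by simp
  qed
  finally show ?thesis .
qed

lemma cs_trans:
  assumes W1: "Wd As" and W2: "Wd Bs" and W3: "Wd Cs" and c1: "cs As Bs k1" and c2: "cs Bs Cs k2"
  shows "cs As Cs (min k1 k2)"
proof -
  let ?k = "min k1 k2"
  have a: "k1 < length As" "k1 < length Bs" and b: "k2 < length Bs" "k2 < length Cs"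
    using c1 c2 unfolding cs_def by auto
  have e1: "suf As ?k = suf Bs ?k"
    using suf_suf[of ?k k1 As] suf_suf[of ?k k1 Bs] a c1 unfolding cs_def by simp
  have e2: "suf Bs ?k = suf Cs ?k"
    using suf_suf[of ?k k2 Bs] suf_suf[of ?k k2 Cs] b c2 unfolding cs_def by simp
  have fB: "full Bs (length Bs - Suc ?k)"
    using c1 c2 unfolding cs_def by (cases "k1 \<le> k2") (simp_all add: min_def)
  have fA: "full As (length As - Suc ?k)"
    using cs_full_shift[OF W1 W2 c1, of ?k] fB by simp
  have fC: "full Cs (length Cs - Suc ?k)"
    using cs_full_shift[OF W2 W3 c2, of ?k] fB by simp
  have "?k < length As" "?k < length Cs" using a b by (simp_all add: min_less_iff_disj)
  then show ?thesis unfolding cs_def using e1 e2 fA fC by simp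
qed

lemma cs_refl: assumes W: "Wd w" shows "cs w w (length w - 1)"
proof -
  have "w \<noteq> []" using W unfolding Wd_def by simp
  then show ?thesis unfolding cs_def using full0[OF W] by simp
qed

lemma cs_cy: assumes W1: "Wd As" and W2: "Wd Bs" and c: "cs As Bs k" shows "cy As = cy Bs"
proof -
  have a: "k < length As" and b: "k < length Bs" and e: "suf As k = suf Bs k"
    and fa: "full As (length As - Suc k)" and fb: "full Bs (length Bs - Suc k)"
    using c unfolding cs_def by auto
  have "cy As = cy (suf As k)" unfolding suf_def by (rule markov[OF W1 _ fa]) (use a in simp)
  also have "\<dots> = cy (suf Bs k)" using e by simp
  also have "\<dots> = cy Bs" unfolding suf_def by (rule markov[OF W2 _ fb, symmetric]) (use b in simp)
  finally show ?thesis .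
qed

lemma cs_last: assumes c: "cs As Bs k" shows "last As = last Bs"
proof -
  have a: "k < length As" and b: "k < length Bs" and e: "suf As k = suf Bs k"
    using c unfolding cs_def by auto
  have "last As = last (suf As k)" unfolding suf_def using a by simp
  also have "\<dots> = last (suf Bs k)" using e by simp
  also have "\<dots> = last Bs" unfolding suf_def using b by simp
  finally show ?thesis .
qed

lemma cs_snoc: assumes c: "cs As Bs k" shows "cs (As @ [A]) (Bs @ [A]) (Suc k)"
proof -
  have a: "k < length As" and b: "k < length Bs" and e: "suf As k = suf Bs k"
    and fa: "full As (length As - Suc k)" and fb: "full Bs (length Bs - Suc k)"
    using c unfolding cs_def by auto
  have "suf (As @ [A]) (Suc k) = suf As k @ [A]" unfolding suf_def using a by simp
  moreover have "suf (Bs @ [A]) (Suc k) = suf Bs k @ [A]" unfolding suf_def using b by simp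
  moreover have "full (As @ [A]) (length (As @ [A]) - Suc (Suc k))"
    using fa full_snoc[of "length As - Suc k" As A] a by simp
  moreover have "full (Bs @ [A]) (length (Bs @ [A]) - Suc (Suc k))"
    using fb full_snoc[of "length Bs - Suc k" Bs A] b by simp
  ultimately show ?thesis unfolding cs_def using a b e by simp
qed

definition LF :: "'a set list \<Rightarrow> nat" where
  "LF w = (GREATEST j. j < length w \<and> full w j)"

lemma LF_props: assumes W: "Wd w"
  shows "LF w < length w" "full w (LF w)" "\<And>j. j < length w \<Longrightarrow> full w j \<Longrightarrow> j \<le> LF w"
proof -
  have ex: "\<exists>j. j < length w \<and> full w j" using full0[OF W] W unfolding Wd_def by auto
  have bd: "\<And>y. y < length w \<and> full w y \<Longrightarrow> y \<le> length w" by simp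
  have "LF w < length w \<and> full w (LF w)" unfolding LF_def by (rule GreatestI_ex_nat[OF ex bd])
  then show "LF w < length w" "full w (LF w)" by auto
  fix j assume "j < length w" "full w j"
  then show "j \<le> LF w" unfolding LF_def by (intro Greatest_le_nat[of _ j "length w"]) auto
qed

lemma LF_unique: assumes W: "Wd w" and x: "x < length w" "full w x"
  and mx: "\<And>j. j < length w \<Longrightarrow> full w j \<Longrightarrow> j \<le> x"
  shows "LF w = x"
  using LF_props[OF W] x mx by (meson le_antisym)

lemma word_height_LF: assumes W: "Wd w"
  shows "word_height T h \<tau> F w = length w - 1 - LF w"
proof -
  have wne: "w \<noteq> []" using W unfolding Wd_def by simp
  have eq: "(GREATEST i. i < length w \<and> csim T h \<tau> F w (drop i w)) = LF w"
  proof (rule Greatest_equality)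
    let ?k = "length w - Suc (LF w)"
    have lf: "LF w < length w" "full w (LF w)" using LF_props[OF W] by auto
    have "cs w (drop (LF w) w) ?k"
    proof -
      have d: "length (drop (LF w) w) = length w - LF w" by simp
      have s1: "suf w ?k = drop (LF w) w" unfolding suf_def using lf by simp
      have s2: "suf (drop (LF w) w) ?k = drop (LF w) w" unfolding suf_def using lf by simp
      have f2: "full (drop (LF w) w) 0" by (rule full0[OF Wd_drop[OF W lf(1)]])
      have "length (drop (LF w) w) - Suc ?k = 0" using lf by simp
      moreover have "?k < length w" "?k < length w - LF w" using lf by arith+
      ultimately show ?thesis unfolding cs_def using s1 s2 f2 lf by simp
    qed
    moreover have "drop (LF w) w \<noteq> []" using lf by simp
    ultimately have "csim T h \<tau> F w (drop (LF w) w)" using csim_iff[OF wne] by blast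
    then show "LF w < length w \<and> csim T h \<tau> F w (drop (LF w) w)" using lf by simp
  next
    fix i assume i: "i < length w \<and> csim T h \<tau> F w (drop i w)"
    have "drop i w \<noteq> []" using i by simp
    then obtain k where k: "cs w (drop i w) k" using csim_iff[OF wne] i by blast
    have "k < length w - i" "full w (length w - Suc k)" using k unfolding cs_def by auto
    then have "i \<le> length w - Suc k" "full w (length w - Suc k)" "length w - Suc k < length w"
      using wne by auto
    then show "i \<le> LF w" using LF_props(3)[OF W] by (meson le_trans)
  qed
  show ?thesis unfolding word_height_def eq ..
qed

lemma cs_LF: assumes W1: "Wd As" and W2: "Wd Bs" and c: "cs As Bs k"
  shows "length As - 1 - LF As = length Bs - 1 - LF Bs"
proof -
  have a: "k < length As" and b: "k < length Bs"
    and fa: "full As (length As - Suc k)" and fb: "full Bs (length Bs - Suc k)"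
    using c unfolding cs_def by auto
  let ?ja = "length As - Suc k" and ?jb = "length Bs - Suc k"
  have la: "?ja \<le> LF As" using LF_props(3)[OF W1 _ fa] a by simp
  have lb: "?jb \<le> LF Bs" using LF_props(3)[OF W2 _ fb] b by simp
  have tr: "full As (length As - Suc k') \<longleftrightarrow> full Bs (length Bs - Suc k')" if "k' \<le> k" for k'
    by (rule cs_full_shift[OF W1 W2 c that])
  define d where "d = LF As - ?ja"
  have dk: "d \<le> k" using LF_props(1)[OF W1] la a unfolding d_def by simp
  have "LF As = length As - Suc (k - d)" using la dk a unfolding d_def by simp
  then have "full As (length As - Suc (k - d))" using LF_props(2)[OF W1] by simp
  then have fbd: "full Bs (length Bs - Suc (k - d))" using tr[of "k - d"] by simp
  have "LF Bs = length Bs - Suc (k - d)"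
  proof (rule LF_unique[OF W2])
    show "length Bs - Suc (k - d) < length Bs" using b by simp
    show "full Bs (length Bs - Suc (k - d))" by (rule fbd)
    fix j assume j: "j < length Bs" "full Bs j"
    show "j \<le> length Bs - Suc (k - d)"
    proof (rule ccontr)
      assume "\<not> j \<le> length Bs - Suc (k - d)"
      then have jg: "j > length Bs - Suc (k - d)" by simp
      define k' where "k' = length Bs - Suc j"
      have k'k: "k' \<le> k" "k' < k - d" using jg j b dk unfolding k'_def by auto
      have "j = length Bs - Suc k'" using j unfolding k'_def by simp
      then have "full Bs (length Bs - Suc k')" using j by simp
      then have "full As (length As - Suc k')" using tr[OF k'k(1)] by simp
      then have "length As - Suc k' \<le> LF As" using LF_props(3)[OF W1] a k'k by simp
      then show False using \<open>LF As = length As - Suc (k - d)\<close> k'k a by simp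
    qed
  qed
  then show ?thesis using \<open>LF As = length As - Suc (k - d)\<close> a b dk by simp
qed

lemma LF_snoc: assumes W: "Wd w" and A: "A \<in> P" and nf: "\<not> full (w @ [A]) (length w)"
  shows "LF (w @ [A]) = LF w"
proof -
  have W': "Wd (w @ [A])" using W A unfolding Wd_def by auto
  show ?thesis
  proof (rule LF_unique[OF W'])
    show "LF w < length (w @ [A])" using LF_props(1)[OF W] by simp
    show "full (w @ [A]) (LF w)" using LF_props(1,2)[OF W] full_snoc by blast
    fix j assume j: "j < length (w @ [A])" "full (w @ [A]) j"
    then have "j \<noteq> length w" using nf by blast
    then have "j < length w" using j by simp
    then show "j \<le> LF w" using j full_snoc LF_props(3)[OF W] by blast
  qed
qed

end


context setting
begin

abbreviation "csm \<equiv> csim T h \<tau> F"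
abbreviation "clsP \<equiv> cls T h \<tau> F P"

lemma cls_mem: "Cs \<in> clsP As \<longleftrightarrow> Wd Cs \<and> csm As Cs"
  unfolding cls_def Wd_def by blast

lemma csim_cs: "Wd As \<Longrightarrow> Wd Bs \<Longrightarrow> csm As Bs \<longleftrightarrow> (\<exists>k. cs As Bs k)"
  unfolding Wd_def by (rule csim_iff) auto

lemma cls_refl: assumes "Wd As" shows "As \<in> clsP As"
proof -
  have "cs As As (length As - 1)" by (rule cs_refl[OF assms])
  then show ?thesis using cls_mem csim_cs[OF assms assms] assms by blast
qed

lemma csm_sym: "Wd As \<Longrightarrow> Wd Bs \<Longrightarrow> csm As Bs \<Longrightarrow> csm Bs As"
  using csim_cs cs_sym by metis

lemma csm_trans: "Wd As \<Longrightarrow> Wd Bs \<Longrightarrow> Wd Cs \<Longrightarrow> csm As Bs \<Longrightarrow> csm Bs Cs \<Longrightarrow> csm As Cs"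
proof -
  assume W: "Wd As" "Wd Bs" "Wd Cs" and c: "csm As Bs" "csm Bs Cs"
  obtain k1 where k1: "cs As Bs k1" using c(1) csim_cs[OF W(1,2)] by blast
  obtain k2 where k2: "cs Bs Cs k2" using c(2) csim_cs[OF W(2,3)] by blast
  have "cs As Cs (min k1 k2)" by (rule cs_trans[OF W k1 k2])
  then show ?thesis using csim_cs[OF W(1,3)] by blast
qed

lemma cls_eqI: assumes W: "Wd As" "Wd Bs" and c: "csm As Bs" shows "clsP As = clsP Bs"
proof
  show "clsP As \<subseteq> clsP Bs"
  proof
    fix Cs assume "Cs \<in> clsP As"
    then have "Wd Cs" "csm As Cs" using cls_mem by auto
    moreover have "csm Bs As" using csm_sym[OF W c] .
    ultimately show "Cs \<in> clsP Bs" using csm_trans[OF W(2) W(1)] cls_mem by blast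
  qed
  show "clsP Bs \<subseteq> clsP As"
  proof
    fix Cs assume "Cs \<in> clsP Bs"
    then have "Wd Cs" "csm Bs Cs" using cls_mem by auto
    then show "Cs \<in> clsP As" using csm_trans[OF W(1) W(2)] c cls_mem by blast
  qed
qed

lemma cls_eqD: assumes W: "Wd As" "Wd Bs" and e: "clsP As = clsP Bs" shows "\<exists>k. cs As Bs k"
proof -
  have "Bs \<in> clsP As" using e cls_refl[OF W(2)] by simp
  then have "csm As Bs" using cls_mem by blast
  then show ?thesis using csim_cs[OF W] by blast
qed

lemma height_cls: assumes W: "Wd As"
  shows "cg_height T h \<tau> F (clsP As) = length As - 1 - LF As"
proof -
  let ?C = "SOME Cs. Cs \<in> clsP As"
  have "?C \<in> clsP As" using cls_refl[OF W] by (rule someI)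
  then have WC: "Wd ?C" and cC: "csm As ?C" using cls_mem by auto
  obtain k where k: "cs As ?C k" using cC csim_cs[OF W WC] by blast
  have "cg_height T h \<tau> F (clsP As) = word_height T h \<tau> F ?C" unfolding cg_height_def ..
  also have "\<dots> = length ?C - 1 - LF ?C" by (rule word_height_LF[OF WC])
  also have "\<dots> = length As - 1 - LF As" using cs_LF[OF W WC k] by simp
  finally show ?thesis .
qed

lemma vertex_cy: assumes W: "Wd Ws" and v: "clsP Ws \<in> cg_vertices T h \<tau> F P" shows "cy Ws \<noteq> {}"
proof -
  obtain Ds where D: "Ds \<noteq> []" "set Ds \<subseteq> P" "cy Ds \<noteq> {}" "clsP Ws = clsP Ds"
    using v unfolding cg_vertices_def by blast
  have WD: "Wd Ds" using D unfolding Wd_def by simp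
  obtain k where "cs Ws Ds k" using cls_eqD[OF W WD D(4)] by blast
  then have "cy Ws = cy Ds" by (rule cs_cy[OF W WD])
  then show ?thesis using D by simp
qed

lemma arrow_D: assumes "cg_arrow T h \<tau> F P \<alpha> \<beta>"
  obtains As A where "Wd As" "A \<in> P" "\<alpha> = clsP As" "\<beta> = clsP (As @ [A])"
    "\<beta> \<in> cg_vertices T h \<tau> F P"
  using assms unfolding cg_arrow_def Wd_def by blast

lemma snoc_height: assumes W: "Wd As" and A: "A \<in> P"
  shows "cg_height T h \<tau> F (clsP (As @ [A])) = length As - LF (As @ [A])"
    and "cg_height T h \<tau> F (clsP (As @ [A])) \<noteq> 0 \<Longrightarrow> \<not> full (As @ [A]) (length As)"
proof -
  have W': "Wd (As @ [A])" using W A unfolding Wd_def by auto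
  show e: "cg_height T h \<tau> F (clsP (As @ [A])) = length As - LF (As @ [A])"
    using height_cls[OF W'] by simp
  assume ne: "cg_height T h \<tau> F (clsP (As @ [A])) \<noteq> 0"
  show "\<not> full (As @ [A]) (length As)"
  proof
    assume "full (As @ [A]) (length As)"
    then have "length As \<le> LF (As @ [A])" using LF_props(3)[OF W'] by simp
    then show False using ne e by simp
  qed
qed

lemma full_last: "full (As @ [A]) (length As) \<longleftrightarrow> cy (As @ [A]) = A"
  unfolding full_def by simp

lemma main_loc:
  assumes "\<alpha> \<in> cg_vertices T h \<tau> F P"
  shows "(\<forall>\<beta> \<beta>'. cg_arrow T h \<tau> F P \<alpha> \<beta> \<and> \<beta> \<notin> cg_basis T h \<tau> F P \<and>
                 cg_arrow T h \<tau> F P \<alpha> \<beta>' \<and> \<beta>' \<notin> cg_basis T h \<tau> F P \<longrightarrow> \<beta> = \<beta>')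
       \<and> (\<forall>\<beta>. cg_arrow T h \<tau> F P \<alpha> \<beta> \<and> cg_height T h \<tau> F \<beta> > 0 \<longrightarrow>
                 cg_height T h \<tau> F \<beta> = cg_height T h \<tau> F \<alpha> + 1)"
proof (intro conjI allI impI)
  fix \<beta> \<beta>'
  assume H: "cg_arrow T h \<tau> F P \<alpha> \<beta> \<and> \<beta> \<notin> cg_basis T h \<tau> F P \<and>
                 cg_arrow T h \<tau> F P \<alpha> \<beta>' \<and> \<beta>' \<notin> cg_basis T h \<tau> F P"
  obtain As A where a: "Wd As" "A \<in> P" "\<alpha> = clsP As" "\<beta> = clsP (As @ [A])"
    "\<beta> \<in> cg_vertices T h \<tau> F P" using H arrow_D by metis
  obtain As' A' where a': "Wd As'" "A' \<in> P" "\<alpha> = clsP As'" "\<beta>' = clsP (As' @ [A'])"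
    "\<beta>' \<in> cg_vertices T h \<tau> F P" using H arrow_D by metis
  have W1: "Wd (As @ [A])" and W1': "Wd (As' @ [A'])" using a a' unfolding Wd_def by auto
  have nb: "\<beta> \<notin> cg_basis T h \<tau> F P" "\<beta>' \<notin> cg_basis T h \<tau> F P" using H by simp_all
  have h1: "cg_height T h \<tau> F \<beta> \<noteq> 0" using nb(1) a(5) unfolding cg_basis_def by simp
  have h1': "cg_height T h \<tau> F \<beta>' \<noteq> 0" using nb(2) a'(5) unfolding cg_basis_def by simp
  have nf: "cy (As @ [A]) \<noteq> A" using snoc_height(2)[OF a(1,2)] h1 a(4) full_last by metis
  have nf': "cy (As' @ [A']) \<noteq> A'" using snoc_height(2)[OF a'(1,2)] h1' a'(4) full_last by metis
  have ne: "cy (As @ [A]) \<noteq> {}" using vertex_cy[OF W1] a(4,5) by simp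
  have ne': "cy (As' @ [A']) \<noteq> {}" using vertex_cy[OF W1'] a'(4,5) by simp
  have As_ne: "As \<noteq> []" "set As \<subseteq> P" using a(1) unfolding Wd_def by auto
  have As_ne': "As' \<noteq> []" "set As' \<subseteq> P" using a'(1) unfolding Wd_def by auto
  have g: "cy (As @ [A]) = G (cy As) A" by (rule cy_snoc[OF As_ne])
  have g': "cy (As' @ [A']) = G (cy As') A'" by (rule cy_snoc[OF As_ne'])
  obtain k where k: "cs As As' k" using cls_eqD[OF a(1) a'(1)] a(3) a'(3) by metis
  have ceq: "cy As = cy As'" by (rule cs_cy[OF a(1) a'(1) k])
  have lP: "last As \<in> P" using As_ne by auto
  have I: "Inv (cy As) (last As)" by (rule Inv_cy[OF As_ne])
  have "A = A'"
    by (rule partial_unique[OF lP I a(2) a'(2)]) (use g g' ceq ne ne' nf nf' in simp_all)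
  have "cs (As @ [A]) (As' @ [A]) (Suc k)" by (rule cs_snoc[OF k])
  moreover have W2: "Wd (As' @ [A])" using W1' \<open>A = A'\<close> by simp
  ultimately have "csm (As @ [A]) (As' @ [A])" using csim_cs[OF W1 W2] by blast
  then have "clsP (As @ [A]) = clsP (As' @ [A])" by (rule cls_eqI[OF W1 W2])
  then show "\<beta> = \<beta>'" using a(4) a'(4) \<open>A = A'\<close> by simp
next
  fix \<beta>
  assume H: "cg_arrow T h \<tau> F P \<alpha> \<beta> \<and> 0 < cg_height T h \<tau> F \<beta>"
  obtain As A where a: "Wd As" "A \<in> P" "\<alpha> = clsP As" "\<beta> = clsP (As @ [A])"
    using H arrow_D by metis
  have hne: "cg_height T h \<tau> F (clsP (As @ [A])) \<noteq> 0" using H a(4) by simp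
  have nf: "\<not> full (As @ [A]) (length As)" by (rule snoc_height(2)[OF a(1,2) hne])
  have "LF (As @ [A]) = LF As" by (rule LF_snoc[OF a(1,2) nf])
  then have hb: "cg_height T h \<tau> F \<beta> = length As - LF As" using snoc_height(1)[OF a(1,2)] a(4) by simp
  have ha: "cg_height T h \<tau> F \<alpha> = length As - 1 - LF As" using height_cls[OF a(1)] a(3) by simp
  have "LF As < length As" by (rule LF_props(1)[OF a(1)])
  then show "cg_height T h \<tau> F \<beta> = cg_height T h \<tau> F \<alpha> + 1" using ha hb by simp
qed

end

theorem mainTheorem7:
  fixes T :: "'a topology" and h :: "real \<Rightarrow> 'a" and \<tau> F :: "'a \<Rightarrow> 'a"
    and \<Lambda> :: "'i set" and \<gamma> :: "'i \<Rightarrow> real \<Rightarrow> 'a"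
    and P :: "'a set set" and l :: "'a set \<Rightarrow> 'i" and p :: "'a set \<Rightarrow> int"
    and \<alpha> :: "'a set list set"
  assumes "lifted_graph T h \<tau>"
    and "continuous_map T T F"
    and "degree_one T \<tau> F"
    and "sun_like T h F \<Lambda> \<gamma>"
    and "basic_partition T h \<tau> F \<Lambda> \<gamma> P l p"
    and "\<alpha> \<in> cg_vertices T h \<tau> F P"
  shows "(\<forall>\<beta> \<beta>'. cg_arrow T h \<tau> F P \<alpha> \<beta> \<and> \<beta> \<notin> cg_basis T h \<tau> F P \<and>
                 cg_arrow T h \<tau> F P \<alpha> \<beta>' \<and> \<beta>' \<notin> cg_basis T h \<tau> F P \<longrightarrow> \<beta> = \<beta>')
       \<and> (\<forall>\<beta>. cg_arrow T h \<tau> F P \<alpha> \<beta> \<and> cg_height T h \<tau> F \<beta> > 0 \<longrightarrow>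
                 cg_height T h \<tau> F \<beta> = cg_height T h \<tau> F \<alpha> + 1)"
proof -
  interpret setting T h \<tau> F \<Lambda> \<gamma> P l p
    by (rule setting.intro) (rule assms)+
  show ?thesis by (rule main_loc[OF assms(6)])
qed

end
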